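(* Consider the FedAvg round $t$ with coordinate-wise REED aggregation (defined in the context) with $M\ge1$ chips and deterministic weights $c_1,\dots,c_M\ge0$, $C_M=\sum_m c_m>0$, and let $\varepsilon^t=\widehat\Delta^t-\bar\Delta^t$. Then $$\mathbb{E}[\varepsilon^t\mid\mathcal{F}_t,\{\Delta_k^t\}_{k=1}^K]=0,\qquad\mathbb{E}[\varepsilon^t\mid\mathcal{F}_t]=0.$$ Moreover, if $\|g_{k,q}^t\|\le G$ almost surely for all $k,q$ (so that $\|\Delta_k^t\|\le\beta QG$), then $\mathbb{E}\|\varepsilon^t\|^2\le\sigma_{\mathrm{air}}^2$, where for $M=1$, $c_1=1$ one may take $$\sigma_{\mathrm{air}}^2=(\beta QG)^2+\frac{2\sigma_z^2\sqrt d}{\eta}(\beta QG)+\frac{2d\sigma_z^4}{\eta^2},$$ and for general $M$ and weights $\{c_m\}$ one may take $$\sigma_{\mathrm{air}}^2=\frac{\sum_{m=1}^Mc_m^2}{C_M^2}(\beta QG)^2+\frac{2\sigma_z^2\sqrt d}{\eta C_M}(\beta QG)+\frac{2dM\sigma_z^4}{\eta^2C_M^2}.$$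
   Context: FedAvg setup: $K$ clients, model dimension $d$; at round $t$ the server holds $w^t\in\mathbb{R}^d$, each client sets $w_{k,0}^t=w^t$ and runs $w_{k,q+1}^t=w_{k,q}^t-\beta g_{k,q}^t$, $q=0,\dots,Q-1$, with stepsize $\beta>0$ and stochastic gradients $g_{k,q}^t$. Local increment $\Delta_k^t=w_{k,Q}^t-w^t=-\beta\sum_q g_{k,q}^t$; ideal aggregate $\bar\Delta^t=\frac1K\sum_k\Delta_k^t$. $\mathcal{F}_t$ is the sigma-field generated by the global model and all randomness up to the beginning of round $t$. Coordinate-wise REED aggregation: fix $\eta>0$, $\sigma_z^2>0$, $\mu_1,\dots,\mu_K>0$. For each coordinate $j=1,\dots,d$ set $u_{k,j}^t=\frac1K[\Delta_k^t]_j$ and $[x]_+=\max\{x,0\}$, $[x]_-=\max\{-x,0\}$. On chip $m$ and branch $\pm$, client $k$ transmits $a_{k,j,m,\pm}^t=\frac{\sqrt{\eta c_m[u_{k,j}^t]_\pm}}{\mu_k}e^{\mathrm{i}\phi_{k,j,m,\pm}^t}$; the receiver observes $y_{j,m,\pm}^t=\sum_{k=1}^K h_{k,j,m,\pm}^t a_{k,j,m,\pm}^t+z_{j,m,\pm}^t$ and sets $[\widehat\Delta^t]_j=\frac{1}{\eta C_M}\sum_{m=1}^M(|y_{j,m,+}^t|^2-|y_{j,m,-}^t|^2)$. Here $h_{k,j,m,\pm}^t\sim\mathcal{CN}(0,\mu_k^2)$, $z_{j,m,\pm}^t\sim\mathcal{CN}(0,\sigma_z^2)$, $\phi_{k,j,m,\pm}^t\sim\mathrm{Unif}[0,2\pi)$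 are mutually independent across all indices and independent of $\mathcal{F}_t$ and of the local increments $\{\Delta_k^t\}$. $\mathcal{CN}(0,\nu)$ is the circularly symmetric complex Gaussian with variance $\nu$. *)

theory Defs
  imports "HOL-Probability.Probability"
begin

text \<open>Positive and negative parts: [x]_+ = max x 0, [x]_- = max (-x) 0.
  Branch '+' is encoded by True, branch '-' by False.\<close>

definition ppart :: "real \<Rightarrow> real" where "ppart x = max x 0"
definition npart :: "real \<Rightarrow> real" where "npart x = max (- x) 0"

definition branch_part :: "bool \<Rightarrow> real \<Rightarrow> real" where
  "branch_part b x = (if b then ppart x else npart x)"

definition cgauss_density :: "real \<Rightarrow> complex \<Rightarrow> real" where
  "cgauss_density nu w = exp (- (cmod w)\<^sup>2 / nu) / (pi * nu)"

definition is_CN :: "'a measure \<Rightarrow> real \<Rightarrow> ('a \<Rightarrow> complex) \<Rightarrow> bool" where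
  "is_CN M nu X \<longleftrightarrow> distributed M lborel X (\<lambda>w. ennreal (cgauss_density nu w))"

definition is_unif_phase :: "'a measure \<Rightarrow> ('a \<Rightarrow> real) \<Rightarrow> bool" where
  "is_unif_phase M X \<longleftrightarrow>
     distributed M lborel X (\<lambda>x. ennreal (indicator {0..<2*pi} x / (2*pi)))"

text \<open>Local increment Delta_k = w_{k,Q} - w = - beta * sum_{q<Q} g_{k,q}.\<close>
definition local_incr :: "real \<Rightarrow> nat \<Rightarrow> (nat \<Rightarrow> nat \<Rightarrow> 'a \<Rightarrow> real^'d) \<Rightarrow> nat \<Rightarrow> 'a \<Rightarrow> real^'d" where
  "local_incr \<beta> Q g k \<omega> = - \<beta> *\<^sub>R (\<Sum>q<Q. g k q \<omega>)"

definition ideal_agg :: "nat \<Rightarrow> (nat \<Rightarrow> 'a \<Rightarrow> real^'d) \<Rightarrow> 'a \<Rightarrow> real^'d" where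
  "ideal_agg K \<Delta> \<omega> = (1 / real K) *\<^sub>R (\<Sum>k<K. \<Delta> k \<omega>)"

definition reed_tx ::
  "real \<Rightarrow> (nat \<Rightarrow> real) \<Rightarrow> (nat \<Rightarrow> real) \<Rightarrow> nat \<Rightarrow> (nat \<Rightarrow> 'a \<Rightarrow> real^'d)
   \<Rightarrow> (nat \<Rightarrow> 'd \<Rightarrow> nat \<Rightarrow> bool \<Rightarrow> 'a \<Rightarrow> real)
   \<Rightarrow> nat \<Rightarrow> 'd \<Rightarrow> nat \<Rightarrow> bool \<Rightarrow> 'a \<Rightarrow> complex" where
  "reed_tx \<eta> c \<mu> K \<Delta> \<phi> k j m b \<omega> =
     complex_of_real (sqrt (\<eta> * c m * branch_part b ((1 / real K) * (\<Delta> k \<omega> $ j))) / \<mu> k)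
       * cis (\<phi> k j m b \<omega>)"

definition reed_rx ::
  "real \<Rightarrow> (nat \<Rightarrow> real) \<Rightarrow> (nat \<Rightarrow> real) \<Rightarrow> nat \<Rightarrow> (nat \<Rightarrow> 'a \<Rightarrow> real^'d)
   \<Rightarrow> (nat \<Rightarrow> 'd \<Rightarrow> nat \<Rightarrow> bool \<Rightarrow> 'a \<Rightarrow> complex)
   \<Rightarrow> ('d \<Rightarrow> nat \<Rightarrow> bool \<Rightarrow> 'a \<Rightarrow> complex)
   \<Rightarrow> (nat \<Rightarrow> 'd \<Rightarrow> nat \<Rightarrow> bool \<Rightarrow> 'a \<Rightarrow> real)
   \<Rightarrow> 'd \<Rightarrow> nat \<Rightarrow> bool \<Rightarrow> 'a \<Rightarrow> complex" where
  "reed_rx \<eta> c \<mu> K \<Delta> h z \<phi> j m b \<omega> =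
     (\<Sum>k<K. h k j m b \<omega> * reed_tx \<eta> c \<mu> K \<Delta> \<phi> k j m b \<omega>) + z j m b \<omega>"

definition reed_est ::
  "real \<Rightarrow> nat \<Rightarrow> (nat \<Rightarrow> real) \<Rightarrow> (nat \<Rightarrow> real) \<Rightarrow> nat \<Rightarrow> (nat \<Rightarrow> 'a \<Rightarrow> real^'d)
   \<Rightarrow> (nat \<Rightarrow> 'd \<Rightarrow> nat \<Rightarrow> bool \<Rightarrow> 'a \<Rightarrow> complex)
   \<Rightarrow> ('d \<Rightarrow> nat \<Rightarrow> bool \<Rightarrow> 'a \<Rightarrow> complex)
   \<Rightarrow> (nat \<Rightarrow> 'd \<Rightarrow> nat \<Rightarrow> bool \<Rightarrow> 'a \<Rightarrow> real)
   \<Rightarrow> 'a \<Rightarrow> real^'d" where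
  "reed_est \<eta> M c \<mu> K \<Delta> h z \<phi> \<omega> =
     (\<chi> j. (1 / (\<eta> * (\<Sum>m<M. c m))) *
        (\<Sum>m<M. (cmod (reed_rx \<eta> c \<mu> K \<Delta> h z \<phi> j m True \<omega>))\<^sup>2
                - (cmod (reed_rx \<eta> c \<mu> K \<Delta> h z \<phi> j m False \<omega>))\<^sup>2))"

datatype 'd noise_idx = Hidx nat 'd nat bool | Zidx 'd nat bool | Phidx nat 'd nat bool

definition noise_idx_set :: "nat \<Rightarrow> nat \<Rightarrow> 'd noise_idx set" where
  "noise_idx_set K M =
     {Hidx k j m b | k j m b. k < K \<and> m < M} \<union> {Zidx j m b | j m b. m < M}
     \<union> {Phidx k j m b | k j m b. k < K \<and> m < M}"

text \<open>All channel random variables as one complex-valued family (phases embedded into C).\<close>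
fun noise_family ::
  "(nat \<Rightarrow> 'd \<Rightarrow> nat \<Rightarrow> bool \<Rightarrow> 'a \<Rightarrow> complex) \<Rightarrow> ('d \<Rightarrow> nat \<Rightarrow> bool \<Rightarrow> 'a \<Rightarrow> complex)
   \<Rightarrow> (nat \<Rightarrow> 'd \<Rightarrow> nat \<Rightarrow> bool \<Rightarrow> 'a \<Rightarrow> real) \<Rightarrow> 'd noise_idx \<Rightarrow> 'a \<Rightarrow> complex" where
  "noise_family h z \<phi> (Hidx k j m b) = h k j m b"
| "noise_family h z \<phi> (Zidx j m b) = z j m b"
| "noise_family h z \<phi> (Phidx k j m b) = (\<lambda>\<omega>. complex_of_real (\<phi> k j m b \<omega>))"

definition cond_field :: "'a measure \<Rightarrow> 'a measure \<Rightarrow> nat \<Rightarrow> (nat \<Rightarrow> 'a \<Rightarrow> real^'d) \<Rightarrow> 'a measure" where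
  "cond_field M Ft K \<Delta> =
     sigma (space M) (sets Ft \<union> {\<Delta> k -` A \<inter> space M | k A. k < K \<and> A \<in> sets borel})"

end

theory Submission
  imports Defs
begin

lemma Complex_eq_fun: "(\<lambda>(x,y). Complex x y) = (\<lambda>p. complex_of_real (fst p) + \<i> * complex_of_real (snd p))"
  by (auto simp: fun_eq_iff complex_eq_iff)

lemma measurable_Complex[measurable]: "(\<lambda>(x,y). Complex x y) \<in> borel_measurable (lborel \<Otimes>\<^sub>M lborel)"
  unfolding Complex_eq_fun by measurable

lemma lborel_complex:
  "(lborel :: complex measure) = distr (lborel \<Otimes>\<^sub>M lborel) borel (\<lambda>(x,y). Complex x y)"
proof (rule lborel_eqI)
  fix l u :: complex
  assume lu: "\<And>b. b \<in> Basis \<Longrightarrow> l \<bullet> b \<le> u \<bullet> b"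
  have le: "Re l \<le> Re u" "Im l \<le> Im u" using lu[of 1] lu[of \<i>] by (auto simp: Basis_complex_def)
  have pre: "(\<lambda>(x,y). Complex x y) -` box l u \<inter> space (lborel \<Otimes>\<^sub>M lborel) =
     {Re l<..<Re u} \<times> {Im l<..<Im u}"
    by (auto simp: box_def Basis_complex_def space_pair_measure)
  have "emeasure (distr (lborel \<Otimes>\<^sub>M lborel) borel (\<lambda>(x,y). Complex x y)) (box l u)
      = emeasure (lborel \<Otimes>\<^sub>M lborel) ({Re l<..<Re u} \<times> {Im l<..<Im u})"
    by (subst emeasure_distr) (auto simp: pre)
  also have "\<dots> = ennreal (Re u - Re l) * ennreal (Im u - Im l)"
    using le by (simp add: lborel.emeasure_pair_measure_Times)
  also have "\<dots> = (\<Prod>b\<in>Basis. (u - l) \<bullet> b)"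
    using le by (simp add: Basis_complex_def ennreal_mult inner_complex_def)
  finally show "emeasure (distr (lborel \<Otimes>\<^sub>M lborel) borel (\<lambda>(x,y). Complex x y)) (box l u) = (\<Prod>b\<in>Basis. (u - l) \<bullet> b)" .
qed simp

lemma cgauss_split:
  assumes "\<nu> > 0"
  shows "cgauss_density \<nu> (Complex x y) =
    normal_density 0 (sqrt (\<nu>/2)) x * normal_density 0 (sqrt (\<nu>/2)) y"
proof -
  have s2: "(sqrt (\<nu>/2))\<^sup>2 = \<nu>/2" using assms by simp
  have "normal_density 0 (sqrt (\<nu>/2)) x * normal_density 0 (sqrt (\<nu>/2)) y
     = (1 / sqrt (pi * \<nu>)) * (1 / sqrt (pi * \<nu>)) * (exp (- x\<^sup>2 / \<nu>) * exp (- y\<^sup>2 / \<nu>))"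
    unfolding normal_density_def s2 by (simp add: field_simps)
  also have "\<dots> = exp (- (x\<^sup>2 + y\<^sup>2) / \<nu>) / (pi * \<nu>)"
    using assms by (simp add: exp_add[symmetric] field_simps real_sqrt_mult[symmetric])
  finally show ?thesis
    unfolding cgauss_density_def by (simp add: cmod_power2)
qed

lemma (in prob_space) distr_pair_snd': 
  assumes "sigma_finite_measure N"
  shows "distr (M \<Otimes>\<^sub>M N) N snd = N"
proof (intro measure_eqI)
  interpret N: sigma_finite_measure N by fact
  interpret pair_sigma_finite M N ..
  fix A assume A: "A \<in> sets (distr (M \<Otimes>\<^sub>M N) N snd)"
  from A have "emeasure (distr (M \<Otimes>\<^sub>M N) N snd) A = emeasure (M \<Otimes>\<^sub>M N) (space M \<times> A)"
    by (auto simp add: emeasure_distr space_pair_measure dest: sets.sets_into_space intro!: arg_cong2[where f=emeasure])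
  with A show "emeasure (distr (M \<Otimes>\<^sub>M N) N snd) A = emeasure N A"
    by (simp add: N.emeasure_pair_measure_Times emeasure_space_1)
qed simp

lemma CN_pair:
  assumes P: "prob_space M" and X: "is_CN M \<nu> X" and nu: "\<nu> > 0"
  shows "distr M (lborel \<Otimes>\<^sub>M lborel) (\<lambda>\<omega>. (Re (X \<omega>), Im (X \<omega>))) =
    density lborel (normal_density 0 (sqrt (\<nu>/2))) \<Otimes>\<^sub>M density lborel (normal_density 0 (sqrt (\<nu>/2)))"
proof -
  let ?nd = "normal_density 0 (sqrt (\<nu>/2))"
  let ?g = "\<lambda>w. ennreal (cgauss_density \<nu> w)"
  let ?Cx = "(\<lambda>(x,y). Complex x y)"
  have D: "distr M lborel X = density lborel ?g" and Xm[measurable]: "X \<in> measurable M lborel"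
    and gm: "?g \<in> borel_measurable lborel"
    using X by (auto simp: is_CN_def distributed_def)
  have Xb[measurable]: "X \<in> borel_measurable M" using Xm by simp
  have "distr M (lborel \<Otimes>\<^sub>M lborel) (\<lambda>\<omega>. (Re (X \<omega>), Im (X \<omega>)))
      = distr (distr M lborel X) (lborel \<Otimes>\<^sub>M lborel) (\<lambda>w. (Re w, Im w))"
    by (subst distr_distr) (auto simp: comp_def)
  also have "\<dots> = distr (density (distr (lborel \<Otimes>\<^sub>M lborel) borel ?Cx) ?g) (lborel \<Otimes>\<^sub>M lborel) (\<lambda>w. (Re w, Im w))"
    unfolding D by (subst (1) lborel_complex) simp
  also have "\<dots> = distr (distr (density (lborel \<Otimes>\<^sub>M lborel) (\<lambda>p. ?g (?Cx p))) borel ?Cx) (lborel \<Otimes>\<^sub>M lborel) (\<lambda>w. (Re w, Im w))"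
    using gm by (subst density_distr) auto
  also have "\<dots> = distr (density (lborel \<Otimes>\<^sub>M lborel) (\<lambda>p. ?g (?Cx p))) (lborel \<Otimes>\<^sub>M lborel) (\<lambda>p. p)"
    using gm by (subst distr_distr) (auto simp: comp_def split_beta)
  also have "\<dots> = density (lborel \<Otimes>\<^sub>M lborel) (\<lambda>p. ?g (?Cx p))"
    by (rule distr_id2) simp
  also have "\<dots> = density (lborel \<Otimes>\<^sub>M lborel) (\<lambda>(x,y). ennreal (?nd x) * ennreal (?nd y))"
    using nu by (intro density_cong) (auto simp: cgauss_split ennreal_mult split_beta)
  also have "\<dots> = density lborel (\<lambda>x. ennreal (?nd x)) \<Otimes>\<^sub>M density lborel (\<lambda>x. ennreal (?nd x))"
  proof (rule pair_measure_density[symmetric])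
    show "sigma_finite_measure (density lborel (\<lambda>x. ennreal (?nd x)))"
    proof -
      interpret prob_space "density lborel (\<lambda>x. ennreal (?nd x))"
        using prob_space_normal_density nu by simp
      show ?thesis by unfold_locales
    qed
  qed (auto simp: lborel.sigma_finite_measure_axioms)
  finally show ?thesis .
qed

lemma (in prob_space) indep_hbi:
  fixes f g :: "'b::topological_space \<Rightarrow> real" and X Z :: "'a \<Rightarrow> 'b"
  assumes ind: "indep_var borel X borel Z"
    and f[measurable]: "f \<in> borel_measurable borel" and g[measurable]: "g \<in> borel_measurable borel"
    and fi: "integrable M (\<lambda>\<omega>. f (X \<omega>))" and gi: "integrable M (\<lambda>\<omega>. g (Z \<omega>))"
  shows "has_bochner_integral M (\<lambda>\<omega>. f (X \<omega>) * g (Z \<omega>))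
           ((\<integral>\<omega>. f (X \<omega>) \<partial>M) * (\<integral>\<omega>. g (Z \<omega>) \<partial>M))"
proof -
  have i2: "indep_var borel (f \<circ> X) borel (g \<circ> Z)"
    by (rule indep_var_compose[OF ind f g])
  have fi': "integrable M (f \<circ> X)" and gi': "integrable M (g \<circ> Z)" using fi gi by (simp_all add: comp_def)
  show ?thesis
    using indep_var_lebesgue_integral[OF i2 fi' gi'] indep_var_integrable[OF i2 fi' gi']
    by (simp add: has_bochner_integral_iff comp_def)
qed

lemma (in prob_space) indep_var_lborel_borel:
  "indep_var lborel X lborel Y \<Longrightarrow> indep_var borel X borel Y"
  by (simp add: indep_var_eq)

definition circ_good :: "'a measure \<Rightarrow> ('a \<Rightarrow> complex) \<Rightarrow> real \<Rightarrow> bool" where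
  "circ_good M X s \<longleftrightarrow> X \<in> borel_measurable M \<and> integrable M (\<lambda>\<omega>. (cmod (X \<omega>))^4) \<and>
     (\<integral>\<omega>. Re (X \<omega>) \<partial>M) = 0 \<and> (\<integral>\<omega>. Im (X \<omega>) \<partial>M) = 0 \<and>
     (\<integral>\<omega>. (Re (X \<omega>))\<^sup>2 \<partial>M) = s/2 \<and> (\<integral>\<omega>. (Im (X \<omega>))\<^sup>2 \<partial>M) = s/2 \<and>
     (\<integral>\<omega>. Re (X \<omega>) * Im (X \<omega>) \<partial>M) = 0 \<and> (\<integral>\<omega>. (cmod (X \<omega>))^4 \<partial>M) = 2 * s\<^sup>2"

lemma CN_good:
  assumes P: "prob_space M" and X: "is_CN M \<nu> X" and nu: "\<nu> > 0"
  shows "circ_good M X \<nu>"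
proof -
  interpret prob_space M by fact
  define s where "s = sqrt (\<nu>/2)"
  have s: "s > 0" "s\<^sup>2 = \<nu>/2" using nu by (auto simp: s_def)
  let ?nd = "normal_density 0 s"
  define D where "D = density lborel (\<lambda>x. ennreal (?nd x))"
  interpret D: prob_space D unfolding D_def using prob_space_normal_density s by simp
  have Xm[measurable]: "X \<in> borel_measurable M"
    using X by (auto simp: is_CN_def distributed_def)
  have P2: "distr M (lborel \<Otimes>\<^sub>M lborel) (\<lambda>\<omega>. (Re (X \<omega>), Im (X \<omega>))) = D \<Otimes>\<^sub>M D"
    using CN_pair[OF P X nu] by (simp add: D_def s_def)
  have "distr M lborel (\<lambda>\<omega>. Re (X \<omega>)) = distr (distr M (lborel \<Otimes>\<^sub>M lborel) (\<lambda>\<omega>. (Re (X \<omega>), Im (X \<omega>)))) lborel fst"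
    by (subst distr_distr) (auto simp: comp_def)
  also have "\<dots> = D"
    unfolding P2 using D.distr_pair_fst[of D] distr_cong[of "D \<Otimes>\<^sub>M D" "D \<Otimes>\<^sub>M D" lborel D fst fst]
    by (simp add: D_def)
  finally have DR: "distr M lborel (\<lambda>\<omega>. Re (X \<omega>)) = D" .
  have "distr M lborel (\<lambda>\<omega>. Im (X \<omega>)) = distr (distr M (lborel \<Otimes>\<^sub>M lborel) (\<lambda>\<omega>. (Re (X \<omega>), Im (X \<omega>)))) lborel snd"
    by (subst distr_distr) (auto simp: comp_def)
  also have "\<dots> = D"
    unfolding P2 using D.distr_pair_snd'[of D] D.sigma_finite_measure_axioms distr_cong[of "D \<Otimes>\<^sub>M D" "D \<Otimes>\<^sub>M D" lborel D snd snd]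
    by (simp add: D_def)
  finally have DI: "distr M lborel (\<lambda>\<omega>. Im (X \<omega>)) = D" .
  have ind0: "indep_var lborel (\<lambda>\<omega>. Re (X \<omega>)) lborel (\<lambda>\<omega>. Im (X \<omega>))"
    using P2 DR DI by (subst indep_var_distribution_eq) auto
  have ind: "indep_var borel (\<lambda>\<omega>. Re (X \<omega>)) borel (\<lambda>\<omega>. Im (X \<omega>))"
    by (rule indep_var_lborel_borel[OF ind0])
  have distR: "distributed M lborel (\<lambda>\<omega>. Re (X \<omega>)) (\<lambda>x. ennreal (?nd x))"
    using DR by (auto simp: distributed_def D_def)
  have distI: "distributed M lborel (\<lambda>\<omega>. Im (X \<omega>)) (\<lambda>x. ennreal (?nd x))"
    using DI by (auto simp: distributed_def D_def)
  have mom: "has_bochner_integral M (\<lambda>\<omega>. (Re (X \<omega>))^k) (\<integral>x. ?nd x * x^k \<partial>lborel)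
           \<and> has_bochner_integral M (\<lambda>\<omega>. (Im (X \<omega>))^k) (\<integral>x. ?nd x * x^k \<partial>lborel)" for k
  proof -
    have int: "integrable lborel (\<lambda>x. ?nd x * x^k)"
      using integrable_normal_moment[of s 0 k] s by simp
    show ?thesis
      using distributed_integrable[OF distR, of "\<lambda>x. x^k"] distributed_integral[OF distR, of "\<lambda>x. x^k"]
        distributed_integrable[OF distI, of "\<lambda>x. x^k"] distributed_integral[OF distI, of "\<lambda>x. x^k"] int
      by (simp add: has_bochner_integral_iff)
  qed
  have m1: "(\<integral>x. ?nd x * x^1 \<partial>lborel) = 0"
    using integral_normal_moment_odd[where k=0 and \<mu>=0 and \<sigma>=s] s by simp
  have m2: "(\<integral>x. ?nd x * x^2 \<partial>lborel) = \<nu>/2"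
    using integral_normal_moment_even[where k=1 and \<mu>=0 and \<sigma>=s] s by (simp add: field_simps power2_eq_square mult.commute)
  have m4: "(\<integral>x. ?nd x * x^4 \<partial>lborel) = 3 * (\<nu>/2)\<^sup>2"
  proof -
    have "(\<integral>x. ?nd x * x^4 \<partial>lborel) = fact 4 / ((2 / s\<^sup>2)^2 * fact 2)"
      using integral_normal_moment_even[where k=2 and \<mu>=0 and \<sigma>=s] s by (simp add: numeral_eq_Suc)
    also have "\<dots> = 3 * (s\<^sup>2)\<^sup>2" using s by (simp add: fact_numeral field_simps)
    finally show ?thesis using s by simp
  qed
  have RI: "has_bochner_integral M (\<lambda>\<omega>. Re (X \<omega>) * Im (X \<omega>)) 0"
    using indep_hbi[OF ind, of "\<lambda>x. x" "\<lambda>x. x"] mom[of 1] m1 by (simp add: has_bochner_integral_iff)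
  have a2: "(\<integral>\<omega>. (Re (X \<omega>))^2 \<partial>M) = \<nu>/2"
    using has_bochner_integral_integral_eq[OF mom[of 2, THEN conjunct1]] m2 by simp
  have b2: "(\<integral>\<omega>. (Im (X \<omega>))^2 \<partial>M) = \<nu>/2"
    using has_bochner_integral_integral_eq[OF mom[of 2, THEN conjunct2]] m2 by simp
  have ia: "integrable M (\<lambda>\<omega>. (Re (X \<omega>))^2)" "integrable M (\<lambda>\<omega>. (Im (X \<omega>))^2)"
    using mom[of 2] by (auto simp: has_bochner_integral_iff)
  have RI2: "has_bochner_integral M (\<lambda>\<omega>. (Re (X \<omega>))\<^sup>2 * (Im (X \<omega>))\<^sup>2) ((\<nu>/2) * (\<nu>/2))"
    using indep_hbi[OF ind, of "\<lambda>x. x^2" "\<lambda>x. x^2", OF _ _ ia] unfolding a2 b2 by simp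
  have eq4: "(cmod (X \<omega>))^4 = (Re (X \<omega>))^4 + 2 * ((Re (X \<omega>))\<^sup>2 * (Im (X \<omega>))\<^sup>2) + (Im (X \<omega>))^4" for \<omega>
  proof -
    have "(cmod (X \<omega>))^4 = ((cmod (X \<omega>))\<^sup>2)\<^sup>2" by simp
    also have "\<dots> = ((Re (X \<omega>))\<^sup>2 + (Im (X \<omega>))\<^sup>2)\<^sup>2" by (simp add: cmod_power2)
    also have "\<dots> = (Re (X \<omega>))^4 + 2 * ((Re (X \<omega>))\<^sup>2 * (Im (X \<omega>))\<^sup>2) + (Im (X \<omega>))^4"
      by (simp add: power2_sum power_mult[symmetric] mult.commute)
    finally show ?thesis .
  qed
  have H4: "has_bochner_integral M (\<lambda>\<omega>. (cmod (X \<omega>))^4) (3 * (\<nu>/2)\<^sup>2 + 2 * ((\<nu>/2) * (\<nu>/2)) + 3 * (\<nu>/2)\<^sup>2)"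
    unfolding eq4
    by (intro has_bochner_integral_add has_bochner_integral_mult_right RI2)
       (use mom[of 4] m4 in auto)
  show ?thesis
    unfolding circ_good_def
    using mom[of 1] mom[of 2] m1 m2 RI H4
    by (auto simp: has_bochner_integral_iff power2_eq_square field_simps)
qed

lemma pow_le_1_4: "(x::real) \<ge> 0 \<Longrightarrow> n \<le> 4 \<Longrightarrow> x^n \<le> 1 + x^4"
proof (cases "x \<le> 1")
  case True
  assume "x \<ge> 0" then have "x^n \<le> 1" using True by (simp add: power_le_one)
  then show ?thesis by (smt (verit) zero_le_power \<open>x \<ge> 0\<close>)
next
  case False
  assume "n \<le> 4" then have "x^n \<le> x^4" using False by (intro power_increasing) auto
  then show ?thesis by simp
qed

lemma good_int:
  assumes P: "prob_space M" and G: "circ_good M X s"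
    and f[measurable]: "f \<in> borel_measurable borel" and b: "\<And>z. \<bar>f z\<bar> \<le> cmod z ^ n" and n: "n \<le> 4"
  shows "integrable M (\<lambda>\<omega>. f (X \<omega>))"
proof -
  interpret prob_space M by fact
  have Xm[measurable]: "X \<in> borel_measurable M" and i4: "integrable M (\<lambda>\<omega>. (cmod (X \<omega>))^4)"
    using G by (auto simp: circ_good_def)
  have "integrable M (\<lambda>\<omega>. 1 + (cmod (X \<omega>))^4)" using i4 by simp
  then show ?thesis
  proof (rule Bochner_Integration.integrable_bound)
    show "AE x in M. norm (f (X x)) \<le> norm (1 + (cmod (X x))^4)"
      using b pow_le_1_4[OF norm_ge_zero n] by (auto intro: order_trans)
  qed measurable
qed

lemma bRe: "\<bar>Re z\<bar> \<le> cmod z ^ 1" using abs_Re_le_cmod by simp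
lemma bIm: "\<bar>Im z\<bar> \<le> cmod z ^ 1" using abs_Im_le_cmod by simp
lemma bRe2: "\<bar>(Re z)\<^sup>2\<bar> \<le> cmod z ^ 2" using cmod_power2[of z] by simp
lemma bIm2: "\<bar>(Im z)\<^sup>2\<bar> \<le> cmod z ^ 2" using cmod_power2[of z] by simp
lemma bReIm: "\<bar>Re z * Im z\<bar> \<le> cmod z ^ 2"
  using mult_mono[OF abs_Re_le_cmod abs_Im_le_cmod] by (simp add: abs_mult power2_eq_square)
lemma bP: "\<bar>(cmod z)\<^sup>2\<bar> \<le> cmod z ^ 2" by simp
lemma bP2: "\<bar>(cmod z)^4\<bar> \<le> cmod z ^ 4" by simp
lemma bPRe: "\<bar>(cmod z)\<^sup>2 * Re z\<bar> \<le> cmod z ^ 3"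
  using mult_left_mono[OF abs_Re_le_cmod, of "(cmod z)\<^sup>2" z] by (simp add: abs_mult power2_eq_square power3_eq_cube)
lemma bPIm: "\<bar>(cmod z)\<^sup>2 * Im z\<bar> \<le> cmod z ^ 3"
  using mult_left_mono[OF abs_Im_le_cmod, of "(cmod z)\<^sup>2" z] by (simp add: abs_mult power2_eq_square power3_eq_cube)

lemmas good_ints = bRe bIm bRe2 bIm2 bReIm bP bP2 bPRe bPIm

lemma expand4:
  fixes x z :: complex
  shows "(cmod (x+z))^4 = (cmod x)^4 + (cmod z)^4 + 2*((cmod x)\<^sup>2*(cmod z)\<^sup>2)
    + 4*(((cmod x)\<^sup>2 * Re x) * Re z) + 4*(((cmod x)\<^sup>2 * Im x) * Im z)
    + 4*(Re x * ((cmod z)\<^sup>2 * Re z)) + 4*(Im x * ((cmod z)\<^sup>2 * Im z))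
    + 4*((Re x)\<^sup>2 * (Re z)\<^sup>2) + 8*((Re x * Im x) * (Re z * Im z)) + 4*((Im x)\<^sup>2 * (Im z)\<^sup>2)"
proof -
  have h: "\<And>w. (cmod w)^4 = ((Re w)\<^sup>2 + (Im w)\<^sup>2)\<^sup>2"
    by (metis cmod_power2 numeral_Bit0 power_add semiring_norm(2) power2_eq_square)
  show ?thesis unfolding h cmod_power2 by (simp add: power2_eq_square algebra_simps)
qed

lemma mRe: "(\<lambda>z::complex. Re z) \<in> borel_measurable borel" by measurable
lemma mIm: "(\<lambda>z::complex. Im z) \<in> borel_measurable borel" by measurable
lemma mRe2: "(\<lambda>z::complex. (Re z)\<^sup>2) \<in> borel_measurable borel" by measurable
lemma mIm2: "(\<lambda>z::complex. (Im z)\<^sup>2) \<in> borel_measurable borel" by measurable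
lemma mReIm: "(\<lambda>z::complex. Re z * Im z) \<in> borel_measurable borel" by measurable
lemma mP: "(\<lambda>z::complex. (cmod z)\<^sup>2) \<in> borel_measurable borel" by measurable
lemma mP2: "(\<lambda>z::complex. (cmod z)^4) \<in> borel_measurable borel" by measurable
lemma mPRe: "(\<lambda>z::complex. (cmod z)\<^sup>2 * Re z) \<in> borel_measurable borel" by measurable
lemma mPIm: "(\<lambda>z::complex. (cmod z)\<^sup>2 * Im z) \<in> borel_measurable borel" by measurable
lemma n14: "(1::nat) \<le> 4" and n24: "(2::nat) \<le> 4" and n34: "(3::nat) \<le> 4" and n44: "(4::nat) \<le> 4" by simp_all

lemma good_add:
  assumes P: "prob_space M" and GX: "circ_good M X s" and GZ: "circ_good M Z t"
    and ind: "prob_space.indep_var M borel X borel Z"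
  shows "circ_good M (\<lambda>\<omega>. X \<omega> + Z \<omega>) (s+t)"
proof -
  interpret prob_space M by fact
  have Xm[measurable]: "X \<in> borel_measurable M" and Zm[measurable]: "Z \<in> borel_measurable M"
    using GX GZ by (auto simp: circ_good_def)
  note gx = GX[unfolded circ_good_def] and gz = GZ[unfolded circ_good_def]
  have iX: "\<And>f n. f \<in> borel_measurable borel \<Longrightarrow> (\<And>z. \<bar>f z\<bar> \<le> cmod z ^ n) \<Longrightarrow> n \<le> 4 \<Longrightarrow> integrable M (\<lambda>\<omega>. f (X \<omega>))"
    using good_int[OF P GX] by blast
  have iZ: "\<And>f n. f \<in> borel_measurable borel \<Longrightarrow> (\<And>z. \<bar>f z\<bar> \<le> cmod z ^ n) \<Longrightarrow> n \<le> 4 \<Longrightarrow> integrable M (\<lambda>\<omega>. f (Z \<omega>))"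
    using good_int[OF P GZ] by blast
  have hb: "\<And>f g nf ng. f \<in> borel_measurable borel \<Longrightarrow> (\<And>z. \<bar>f z\<bar> \<le> cmod z ^ nf) \<Longrightarrow> nf \<le> 4 \<Longrightarrow>
     g \<in> borel_measurable borel \<Longrightarrow> (\<And>z. \<bar>g z\<bar> \<le> cmod z ^ ng) \<Longrightarrow> ng \<le> 4 \<Longrightarrow>
     has_bochner_integral M (\<lambda>\<omega>. f (X \<omega>) * g (Z \<omega>)) ((\<integral>\<omega>. f (X \<omega>) \<partial>M) * (\<integral>\<omega>. g (Z \<omega>) \<partial>M))"
    by (rule indep_hbi[OF ind]) (auto intro: iX iZ)
  have hX: "\<And>f n. f \<in> borel_measurable borel \<Longrightarrow> (\<And>z. \<bar>f z\<bar> \<le> cmod z ^ n) \<Longrightarrow> n \<le> 4 \<Longrightarrow>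
      has_bochner_integral M (\<lambda>\<omega>. f (X \<omega>)) (\<integral>\<omega>. f (X \<omega>) \<partial>M)"
    by (rule has_bochner_integral_integrable) (rule iX)
  have hZ: "\<And>f n. f \<in> borel_measurable borel \<Longrightarrow> (\<And>z. \<bar>f z\<bar> \<le> cmod z ^ n) \<Longrightarrow> n \<le> 4 \<Longrightarrow>
      has_bochner_integral M (\<lambda>\<omega>. f (Z \<omega>)) (\<integral>\<omega>. f (Z \<omega>) \<partial>M)"
    by (rule has_bochner_integral_integrable) (rule iZ)
  have PX: "(\<integral>\<omega>. (cmod (X \<omega>))\<^sup>2 \<partial>M) = s"
  proof -
    have "has_bochner_integral M (\<lambda>\<omega>. (Re (X \<omega>))\<^sup>2 + (Im (X \<omega>))\<^sup>2) (s/2 + s/2)"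
      using has_bochner_integral_add[OF hX[OF mRe2 bRe2 n24] hX[OF mIm2 bIm2 n24]] gx by simp
    then show ?thesis by (simp add: cmod_power2 has_bochner_integral_iff)
  qed
  have PZ: "(\<integral>\<omega>. (cmod (Z \<omega>))\<^sup>2 \<partial>M) = t"
  proof -
    have "has_bochner_integral M (\<lambda>\<omega>. (Re (Z \<omega>))\<^sup>2 + (Im (Z \<omega>))\<^sup>2) (t/2 + t/2)"
      using has_bochner_integral_add[OF hZ[OF mRe2 bRe2 n24] hZ[OF mIm2 bIm2 n24]] gz by simp
    then show ?thesis by (simp add: cmod_power2 has_bochner_integral_iff)
  qed
  have H1: "has_bochner_integral M (\<lambda>\<omega>. Re (X \<omega> + Z \<omega>)) 0"
    using has_bochner_integral_add[OF hX[OF mRe bRe n14] hZ[OF mRe bRe n14]] gx gz by simp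
  have H2: "has_bochner_integral M (\<lambda>\<omega>. Im (X \<omega> + Z \<omega>)) 0"
    using has_bochner_integral_add[OF hX[OF mIm bIm n14] hZ[OF mIm bIm n14]] gx gz by simp
  have H3: "has_bochner_integral M (\<lambda>\<omega>. (Re (X \<omega> + Z \<omega>))\<^sup>2) ((s+t)/2)"
  proof -
    have e: "\<And>\<omega>. (Re (X \<omega> + Z \<omega>))\<^sup>2 = (Re (X \<omega>))\<^sup>2 + 2 * (Re (X \<omega>) * Re (Z \<omega>)) + (Re (Z \<omega>))\<^sup>2"
      by (simp add: power2_eq_square algebra_simps)
    show ?thesis unfolding e
      using has_bochner_integral_add[OF has_bochner_integral_add[OF hX[OF mRe2 bRe2 n24]
        has_bochner_integral_mult_right[OF hb[OF mRe bRe n14 mRe bRe n14]]] hZ[OF mRe2 bRe2 n24], of 2] gx gz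
      by (simp add: field_simps)
  qed
  have H4: "has_bochner_integral M (\<lambda>\<omega>. (Im (X \<omega> + Z \<omega>))\<^sup>2) ((s+t)/2)"
  proof -
    have e: "\<And>\<omega>. (Im (X \<omega> + Z \<omega>))\<^sup>2 = (Im (X \<omega>))\<^sup>2 + 2 * (Im (X \<omega>) * Im (Z \<omega>)) + (Im (Z \<omega>))\<^sup>2"
      by (simp add: power2_eq_square algebra_simps)
    show ?thesis unfolding e
      using has_bochner_integral_add[OF has_bochner_integral_add[OF hX[OF mIm2 bIm2 n24]
        has_bochner_integral_mult_right[OF hb[OF mIm bIm n14 mIm bIm n14]]] hZ[OF mIm2 bIm2 n24], of 2] gx gz
      by (simp add: field_simps)
  qed
  have H5: "has_bochner_integral M (\<lambda>\<omega>. Re (X \<omega> + Z \<omega>) * Im (X \<omega> + Z \<omega>)) 0"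
  proof -
    have e: "\<And>\<omega>. Re (X \<omega> + Z \<omega>) * Im (X \<omega> + Z \<omega>) = Re (X \<omega>) * Im (X \<omega>) + Re (X \<omega>) * Im (Z \<omega>) + Im (X \<omega>) * Re (Z \<omega>) + Re (Z \<omega>) * Im (Z \<omega>)"
      by (simp add: algebra_simps)
    show ?thesis unfolding e
      using has_bochner_integral_add[OF has_bochner_integral_add[OF has_bochner_integral_add[OF
         hX[OF mReIm bReIm n24] hb[OF mRe bRe n14 mIm bIm n14]] hb[OF mIm bIm n14 mRe bRe n14]]
         hZ[OF mReIm bReIm n24]] gx gz
      by simp
  qed
  have H6: "has_bochner_integral M (\<lambda>\<omega>. (cmod (X \<omega> + Z \<omega>))^4) (2*(s+t)\<^sup>2)"
  proof -
    note A = has_bochner_integral_add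
    note C = has_bochner_integral_mult_right
    have "has_bochner_integral M (\<lambda>\<omega>. (cmod (X \<omega>))^4 + (cmod (Z \<omega>))^4 + 2*((cmod (X \<omega>))\<^sup>2*(cmod (Z \<omega>))\<^sup>2)
    + 4*(((cmod (X \<omega>))\<^sup>2 * Re (X \<omega>)) * Re (Z \<omega>)) + 4*(((cmod (X \<omega>))\<^sup>2 * Im (X \<omega>)) * Im (Z \<omega>))
    + 4*(Re (X \<omega>) * ((cmod (Z \<omega>))\<^sup>2 * Re (Z \<omega>))) + 4*(Im (X \<omega>) * ((cmod (Z \<omega>))\<^sup>2 * Im (Z \<omega>)))
    + 4*((Re (X \<omega>))\<^sup>2 * (Re (Z \<omega>))\<^sup>2) + 8*((Re (X \<omega>) * Im (X \<omega>)) * (Re (Z \<omega>) * Im (Z \<omega>))) + 4*((Im (X \<omega>))\<^sup>2 * (Im (Z \<omega>))\<^sup>2))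
     (2*(s^2) + 2*(t^2) + 2*(s*t) + 4*((\<integral>\<omega>. (cmod (X \<omega>))\<^sup>2 * Re (X \<omega>) \<partial>M)*0)
      + 4*((\<integral>\<omega>. (cmod (X \<omega>))\<^sup>2 * Im (X \<omega>) \<partial>M)*0)
      + 4*(0*(\<integral>\<omega>. (cmod (Z \<omega>))\<^sup>2 * Re (Z \<omega>) \<partial>M)) + 4*(0*(\<integral>\<omega>. (cmod (Z \<omega>))\<^sup>2 * Im (Z \<omega>) \<partial>M))
      + 4*((s/2)*(t/2)) + 8*(0*0) + 4*((s/2)*(t/2)))"
      using A[OF A[OF A[OF A[OF A[OF A[OF A[OF A[OF A[OF hX[OF mP2 bP2 n44] hZ[OF mP2 bP2 n44]]
       C[OF hb[OF mP bP n24 mP bP n24], of 2]]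
       C[OF hb[OF mPRe bPRe n34 mRe bRe n14], of 4]]
       C[OF hb[OF mPIm bPIm n34 mIm bIm n14], of 4]]
       C[OF hb[OF mRe bRe n14 mPRe bPRe n34], of 4]]
       C[OF hb[OF mIm bIm n14 mPIm bPIm n34], of 4]]
       C[OF hb[OF mRe2 bRe2 n24 mRe2 bRe2 n24], of 4]]
       C[OF hb[OF mReIm bReIm n24 mReIm bReIm n24], of 8]]
       C[OF hb[OF mIm2 bIm2 n24 mIm2 bIm2 n24], of 4]]
       gx gz PX PZ
      by simp
    then show ?thesis unfolding expand4[symmetric]
      by (simp add: power2_eq_square algebra_simps)
  qed
  show ?thesis
    unfolding circ_good_def
    using H1 H2 H3 H4 H5 H6
    by (auto simp: has_bochner_integral_iff)
qed

lemma good_scale: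
  assumes P: "prob_space M" and G: "circ_good M X s"
  shows "circ_good M (\<lambda>\<omega>. complex_of_real r * X \<omega>) (r\<^sup>2 * s)"
proof -
  interpret prob_space M by fact
  note g = G[unfolded circ_good_def]
  have i1: "integrable M (\<lambda>\<omega>. (cmod (X \<omega>))^4)" using g by simp
  have e4: "\<And>\<omega>. (cmod (complex_of_real r * X \<omega>))^4 = r^4 * (cmod (X \<omega>))^4"
    by (simp add: norm_mult power_mult_distrib)
  have e2: "\<And>\<omega>. (r * Re (X \<omega>))\<^sup>2 = r\<^sup>2 * (Re (X \<omega>))\<^sup>2" "\<And>\<omega>. (r * Im (X \<omega>))\<^sup>2 = r\<^sup>2 * (Im (X \<omega>))\<^sup>2"
    "\<And>\<omega>. r * Re (X \<omega>) * (r * Im (X \<omega>)) = r\<^sup>2 * (Re (X \<omega>) * Im (X \<omega>))"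
    by (simp_all add: power2_eq_square)
  have r1: "(\<integral>\<omega>. (Re (complex_of_real r * X \<omega>))\<^sup>2 \<partial>M) = r\<^sup>2 * (\<integral>\<omega>. (Re (X \<omega>))\<^sup>2 \<partial>M)"
    by (simp add: power_mult_distrib)
  have r2: "(\<integral>\<omega>. (Im (complex_of_real r * X \<omega>))\<^sup>2 \<partial>M) = r\<^sup>2 * (\<integral>\<omega>. (Im (X \<omega>))\<^sup>2 \<partial>M)"
    by (simp add: power_mult_distrib)
  have r3: "(\<integral>\<omega>. Re (complex_of_real r * X \<omega>) * Im (complex_of_real r * X \<omega>) \<partial>M) = r\<^sup>2 * (\<integral>\<omega>. Re (X \<omega>) * Im (X \<omega>) \<partial>M)"
    by (simp add: power2_eq_square mult_ac)
  have r4: "(\<integral>\<omega>. (cmod (complex_of_real r * X \<omega>))^4 \<partial>M) = r^4 * (\<integral>\<omega>. (cmod (X \<omega>))^4 \<partial>M)"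
    unfolding e4 by simp
  have r5: "(\<integral>\<omega>. Re (complex_of_real r * X \<omega>) \<partial>M) = r * (\<integral>\<omega>. Re (X \<omega>) \<partial>M)"
       "(\<integral>\<omega>. Im (complex_of_real r * X \<omega>) \<partial>M) = r * (\<integral>\<omega>. Im (X \<omega>) \<partial>M)"
    by simp_all
  have "(r\<^sup>2 * s)\<^sup>2 = r^4 * s\<^sup>2" by (simp add: power_mult_distrib)
  then show ?thesis
    unfolding circ_good_def using g i1
    by (simp only: r1 r2 r3 r4 r5 e4) (auto)
qed

lemma good_phase:
  assumes P: "prob_space M" and G: "circ_good M X s" and Um[measurable]: "U \<in> borel_measurable M"
    and U1: "\<And>\<omega>. cmod (U \<omega>) = 1" and ind: "prob_space.indep_var M borel X borel U"
  shows "circ_good M (\<lambda>\<omega>. X \<omega> * U \<omega>) s"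
proof -
  interpret prob_space M by fact
  have Xm[measurable]: "X \<in> borel_measurable M" using G by (auto simp: circ_good_def)
  note gx = G[unfolded circ_good_def]
  have iX: "\<And>f n. f \<in> borel_measurable borel \<Longrightarrow> (\<And>z. \<bar>f z\<bar> \<le> cmod z ^ n) \<Longrightarrow> n \<le> 4 \<Longrightarrow> integrable M (\<lambda>\<omega>. f (X \<omega>))"
    using good_int[OF P G] by blast
  have iU: "\<And>f n. f \<in> borel_measurable borel \<Longrightarrow> (\<And>z. \<bar>f z\<bar> \<le> cmod z ^ n) \<Longrightarrow> n \<le> 4 \<Longrightarrow> integrable M (\<lambda>\<omega>. f (U \<omega>))"
  proof -
    fix f :: "complex \<Rightarrow> real" and n :: nat
    assume f[measurable]: "f \<in> borel_measurable borel" and b: "\<And>z. \<bar>f z\<bar> \<le> cmod z ^ n"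
    show "integrable M (\<lambda>\<omega>. f (U \<omega>))"
      by (rule integrable_const_bound[where B=1]) (auto intro!: AE_I2, metis b U1 power_one)
  qed
  have hb: "\<And>f g nf ng. f \<in> borel_measurable borel \<Longrightarrow> (\<And>z. \<bar>f z\<bar> \<le> cmod z ^ nf) \<Longrightarrow> nf \<le> 4 \<Longrightarrow>
     g \<in> borel_measurable borel \<Longrightarrow> (\<And>z. \<bar>g z\<bar> \<le> cmod z ^ ng) \<Longrightarrow> ng \<le> 4 \<Longrightarrow>
     has_bochner_integral M (\<lambda>\<omega>. f (X \<omega>) * g (U \<omega>)) ((\<integral>\<omega>. f (X \<omega>) \<partial>M) * (\<integral>\<omega>. g (U \<omega>) \<partial>M))"
    by (rule indep_hbi[OF ind]) (auto intro: iX iU)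
  have uv: "(\<integral>\<omega>. (Re (U \<omega>))\<^sup>2 \<partial>M) + (\<integral>\<omega>. (Im (U \<omega>))\<^sup>2 \<partial>M) = 1"
  proof -
    have "(\<integral>\<omega>. (Re (U \<omega>))\<^sup>2 \<partial>M) + (\<integral>\<omega>. (Im (U \<omega>))\<^sup>2 \<partial>M) = (\<integral>\<omega>. (Re (U \<omega>))\<^sup>2 + (Im (U \<omega>))\<^sup>2 \<partial>M)"
      using iU[OF mRe2 bRe2 n24] iU[OF mIm2 bIm2 n24] by simp
    also have "\<dots> = (\<integral>\<omega>. 1 \<partial>M)"
      by (simp add: cmod_power2[symmetric] U1)
    finally show ?thesis by (simp add: prob_space)
  qed
  have uv2: "s * (\<integral>\<omega>. (Re (U \<omega>))\<^sup>2 \<partial>M) + s * (\<integral>\<omega>. (Im (U \<omega>))\<^sup>2 \<partial>M) = s"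
     "s * (\<integral>\<omega>. (Im (U \<omega>))\<^sup>2 \<partial>M) + s * (\<integral>\<omega>. (Re (U \<omega>))\<^sup>2 \<partial>M) = s"
    using uv by (simp_all add: distrib_left[symmetric] add.commute)
  note A = has_bochner_integral_add and D = has_bochner_integral_diff and C = has_bochner_integral_mult_right
  have H1: "has_bochner_integral M (\<lambda>\<omega>. Re (X \<omega> * U \<omega>)) 0"
    using D[OF hb[OF mRe bRe n14 mRe bRe n14] hb[OF mIm bIm n14 mIm bIm n14]] gx by simp
  have H2: "has_bochner_integral M (\<lambda>\<omega>. Im (X \<omega> * U \<omega>)) 0"
    using A[OF hb[OF mRe bRe n14 mIm bIm n14] hb[OF mIm bIm n14 mRe bRe n14]] gx by simp
  have H3: "has_bochner_integral M (\<lambda>\<omega>. (Re (X \<omega> * U \<omega>))\<^sup>2) (s/2)"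
  proof -
    have e: "\<And>\<omega>. (Re (X \<omega> * U \<omega>))\<^sup>2 = (Re (X \<omega>))\<^sup>2 * (Re (U \<omega>))\<^sup>2 - 2 * ((Re (X \<omega>) * Im (X \<omega>)) * (Re (U \<omega>) * Im (U \<omega>))) + (Im (X \<omega>))\<^sup>2 * (Im (U \<omega>))\<^sup>2"
      by (simp add: power2_eq_square algebra_simps)
    show ?thesis unfolding e
      using A[OF D[OF hb[OF mRe2 bRe2 n24 mRe2 bRe2 n24] C[OF hb[OF mReIm bReIm n24 mReIm bReIm n24], of 2]]
          hb[OF mIm2 bIm2 n24 mIm2 bIm2 n24]] gx uv
      by (simp add: field_simps uv2)
  qed
  have H4: "has_bochner_integral M (\<lambda>\<omega>. (Im (X \<omega> * U \<omega>))\<^sup>2) (s/2)"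
  proof -
    have e: "\<And>\<omega>. (Im (X \<omega> * U \<omega>))\<^sup>2 = (Re (X \<omega>))\<^sup>2 * (Im (U \<omega>))\<^sup>2 + 2 * ((Re (X \<omega>) * Im (X \<omega>)) * (Re (U \<omega>) * Im (U \<omega>))) + (Im (X \<omega>))\<^sup>2 * (Re (U \<omega>))\<^sup>2"
      by (simp add: power2_eq_square algebra_simps)
    show ?thesis unfolding e
      using A[OF A[OF hb[OF mRe2 bRe2 n24 mIm2 bIm2 n24] C[OF hb[OF mReIm bReIm n24 mReIm bReIm n24], of 2]]
          hb[OF mIm2 bIm2 n24 mRe2 bRe2 n24]] gx uv
      by (simp add: field_simps uv2)
  qed
  have H5: "has_bochner_integral M (\<lambda>\<omega>. Re (X \<omega> * U \<omega>) * Im (X \<omega> * U \<omega>)) 0"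
  proof -
    have e: "\<And>\<omega>. Re (X \<omega> * U \<omega>) * Im (X \<omega> * U \<omega>) =
       ((Re (X \<omega>))\<^sup>2 * (Re (U \<omega>) * Im (U \<omega>)) + (Re (X \<omega>) * Im (X \<omega>)) * (Re (U \<omega>))\<^sup>2)
       - ((Re (X \<omega>) * Im (X \<omega>)) * (Im (U \<omega>))\<^sup>2 + (Im (X \<omega>))\<^sup>2 * (Re (U \<omega>) * Im (U \<omega>)))"
      by (simp add: power2_eq_square algebra_simps)
    show ?thesis unfolding e
      using D[OF A[OF hb[OF mRe2 bRe2 n24 mReIm bReIm n24] hb[OF mReIm bReIm n24 mRe2 bRe2 n24]]
                 A[OF hb[OF mReIm bReIm n24 mIm2 bIm2 n24] hb[OF mIm2 bIm2 n24 mReIm bReIm n24]]] gx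
      by (simp add: field_simps)
  qed
  have e4: "\<And>\<omega>. (cmod (X \<omega> * U \<omega>))^4 = (cmod (X \<omega>))^4" using U1 by (simp add: norm_mult)
  show ?thesis
    unfolding circ_good_def e4
    using H1 H2 H3 H4 H5 gx
    by (auto simp: has_bochner_integral_iff)
qed

lemma good_zero: "prob_space M \<Longrightarrow> circ_good M (\<lambda>\<omega>. 0) 0"
  by (simp add: circ_good_def)

lemma (in prob_space) indep_groups:
  assumes ind: "indep_vars M' X I" and AB: "A \<inter> B = {}" "A \<subseteq> I" "B \<subseteq> I"
    and f: "f \<in> measurable (PiM A M') N1" and g: "g \<in> measurable (PiM B M') N2"
  shows "indep_var N1 (\<lambda>\<omega>. f (restrict (\<lambda>i. X i \<omega>) A)) N2 (\<lambda>\<omega>. g (restrict (\<lambda>i. X i \<omega>) B))"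
  using indep_var_compose[OF indep_var_restrict[OF ind AB] f g] by (simp add: comp_def)

lemma (in prob_space) indep_vars_groups:
  assumes ind: "indep_vars M' X I" and G: "\<And>j. j \<in> L \<Longrightarrow> G j \<subseteq> I" and D: "disjoint_family_on G L"
    and f: "\<And>j. j \<in> L \<Longrightarrow> f j \<in> measurable (PiM (G j) M') (N j)"
  shows "indep_vars N (\<lambda>j \<omega>. f j (restrict (\<lambda>i. X i \<omega>) (G j))) L"
  by (rule indep_vars_compose2[OF indep_vars_restrict[OF ind G D] f])

lemma good_sum:
  assumes P: "prob_space M" and fin: "finite S"
    and ind: "prob_space.indep_vars M (\<lambda>_. borel) T S"
    and G: "\<And>k. k \<in> S \<Longrightarrow> circ_good M (T k) (s k)"
  shows "circ_good M (\<lambda>\<omega>. \<Sum>k\<in>S. T k \<omega>) (\<Sum>k\<in>S. s k)"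
  using fin ind G
proof (induction S rule: finite_induct)
  case empty
  then show ?case using good_zero[OF P] by simp
next
  case (insert x F)
  interpret prob_space M by fact
  have indF: "indep_vars (\<lambda>_. borel) T F"
    using insert.prems(1) by (rule indep_vars_subset) auto
  have GF: "circ_good M (\<lambda>\<omega>. \<Sum>k\<in>F. T k \<omega>) (\<Sum>k\<in>F. s k)"
    using insert.IH[OF indF] insert.prems(2) by auto
  have m1: "(\<lambda>f. \<Sum>k\<in>F. f k * 1) \<in> borel_measurable (PiM F (\<lambda>_. borel :: complex measure))"
  proof (rule borel_measurable_sum)
    fix k assume "k \<in> F"
    then have "(\<lambda>f. f k) \<in> borel_measurable (PiM F (\<lambda>_. borel :: complex measure))" by (rule measurable_component_singleton)
    then show "(\<lambda>f. f k * 1) \<in> borel_measurable (PiM F (\<lambda>_. borel :: complex measure))" by simp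
  qed
  have m2: "(\<lambda>f. f x) \<in> borel_measurable (PiM {x} (\<lambda>_. borel :: complex measure))"
    by measurable
  have iv: "indep_var borel (\<lambda>\<omega>. (\<lambda>f. \<Sum>k\<in>F. f k * 1) (restrict (\<lambda>i. T i \<omega>) F)) borel (\<lambda>\<omega>. (\<lambda>f. f x) (restrict (\<lambda>i. T i \<omega>) {x}))"
    by (rule indep_groups[OF insert.prems(1) _ _ _ m1 m2]) (use insert.hyps in auto)
  have iv': "indep_var borel (\<lambda>\<omega>. \<Sum>k\<in>F. T k \<omega>) borel (T x)"
    using iv by simp
  show ?case
    using good_add[OF P GF insert.prems(2)[of x] iv'] insert.hyps by (simp add: add.commute)
qed

lemma (in prob_space) indep_sets_reindex_Some:
  assumes ind: "indep_sets F (Some ` I)"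
  shows "indep_sets (\<lambda>i. F (Some i)) I"
proof (rule indep_setsI)
  fix i assume "i \<in> I"
  then show "F (Some i) \<subseteq> events" using ind unfolding indep_sets_def by auto
next
  fix A J assume J: "J \<noteq> {}" "J \<subseteq> I" "finite J" and A: "\<forall>j\<in>J. A j \<in> F (Some j)"
  define A' where "A' x = A (the x)" for x
  have "prob (\<Inter>j\<in>Some ` J. A' j) = (\<Prod>j\<in>Some ` J. prob (A' j))"
    by (rule indep_setsD[OF ind]) (use J A in \<open>auto simp: A'_def\<close>)
  moreover have "(\<Inter>j\<in>Some ` J. A' j) = (\<Inter>j\<in>J. A j)" by (auto simp: A'_def)
  moreover have "(\<Prod>j\<in>Some ` J. prob (A' j)) = (\<Prod>j\<in>J. prob (A j))"
    by (subst prod.reindex) (auto simp: A'_def)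
  ultimately show "prob (\<Inter>j\<in>J. A j) = (\<Prod>j\<in>J. prob (A j))" by simp
qed

locale reed_setup =
  fixes M :: "'a measure" and Ft :: "'a measure"
    and K Q Mc :: nat and \<beta> \<eta> \<sigma>z2 :: real
    and \<mu> c :: "nat \<Rightarrow> real"
    and g :: "nat \<Rightarrow> nat \<Rightarrow> 'a \<Rightarrow> real^'d"
    and h :: "nat \<Rightarrow> 'd \<Rightarrow> nat \<Rightarrow> bool \<Rightarrow> 'a \<Rightarrow> complex"
    and z :: "'d \<Rightarrow> nat \<Rightarrow> bool \<Rightarrow> 'a \<Rightarrow> complex"
    and \<phi> :: "nat \<Rightarrow> 'd \<Rightarrow> nat \<Rightarrow> bool \<Rightarrow> 'a \<Rightarrow> real"
  assumes P: "prob_space M"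
    and Ft: "subalgebra M Ft"
    and K: "K \<ge> 1"
    and eta: "\<eta> > 0"
    and sz: "\<sigma>z2 > 0"
    and mu: "\<And>k. k < K \<Longrightarrow> \<mu> k > 0"
    and Mc: "Mc \<ge> 1"
    and c_nonneg: "\<And>m. m < Mc \<Longrightarrow> c m \<ge> 0"
    and C_pos: "(\<Sum>m<Mc. c m) > 0"
    and g_meas: "\<And>k q. k < K \<Longrightarrow> q < Q \<Longrightarrow> g k q \<in> borel_measurable M"
    and g_int: "\<And>k q. k < K \<Longrightarrow> q < Q \<Longrightarrow> integrable M (g k q)"
    and h_dist: "\<And>k j m b. k < K \<Longrightarrow> m < Mc \<Longrightarrow> is_CN M ((\<mu> k)\<^sup>2) (h k j m b)"
    and z_dist: "\<And>j m b. m < Mc \<Longrightarrow> is_CN M \<sigma>z2 (z j m b)"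
    and phi_dist: "\<And>k j m b. k < K \<Longrightarrow> m < Mc \<Longrightarrow> is_unif_phase M (\<phi> k j m b)"
    and indep: "prob_space.indep_sets M
                  (\<lambda>i. case i of
                         None \<Rightarrow> sets (cond_field M Ft K (local_incr \<beta> Q g))
                       | Some n \<Rightarrow> {noise_family h z \<phi> n -` A \<inter> space M | A. A \<in> sets borel})
                  (insert None (Some ` noise_idx_set K Mc))"
begin

interpretation prob_space M by (rule P)

abbreviation "\<Delta> \<equiv> local_incr \<beta> Q g"
abbreviation "Ccf \<equiv> cond_field M Ft K \<Delta>"
abbreviation "I \<equiv> (noise_idx_set K Mc :: 'd noise_idx set)"
abbreviation "X \<equiv> noise_family h z \<phi>"
definition "Nv \<omega> = restrict (\<lambda>i. X i \<omega>) I"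

lemma finite_I: "finite I"
proof -
  have "I \<subseteq> (\<lambda>(k,j,m,b). Hidx k j m b) ` ({..<K} \<times> UNIV \<times> {..<Mc} \<times> UNIV)
      \<union> (\<lambda>(j,m,b). Zidx j m b) ` (UNIV \<times> {..<Mc} \<times> UNIV)
      \<union> (\<lambda>(k,j,m,b). Phidx k j m b) ` ({..<K} \<times> UNIV \<times> {..<Mc} \<times> UNIV)"
  proof
    fix x assume "x \<in> I"
    then show "x \<in> (\<lambda>(k,j,m,b). Hidx k j m b) ` ({..<K} \<times> UNIV \<times> {..<Mc} \<times> UNIV)
      \<union> (\<lambda>(j,m,b). Zidx j m b) ` (UNIV \<times> {..<Mc} \<times> UNIV)
      \<union> (\<lambda>(k,j,m,b). Phidx k j m b) ` ({..<K} \<times> UNIV \<times> {..<Mc} \<times> UNIV)"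
      unfolding noise_idx_set_def
      by (elim UnE CollectE exE conjE) (auto simp: image_iff)
  qed
  moreover have "finite \<dots>" by (intro finite_UnI finite_imageI finite_cartesian_product) (auto simp: finite_class.finite_UNIV)
  ultimately show ?thesis by (rule finite_subset)
qed

lemma X_meas: "i \<in> I \<Longrightarrow> X i \<in> borel_measurable M"
proof -
  assume "i \<in> I"
  then consider (H) k j m b where "i = Hidx k j m b" "k < K" "m < Mc"
    | (Z) j m b where "i = Zidx j m b" "m < Mc" | (Ph) k j m b where "i = Phidx k j m b" "k < K" "m < Mc"
    unfolding noise_idx_set_def by blast
  then show ?thesis
  proof cases
    case H then show ?thesis using h_dist[of k m j b] by (auto simp: is_CN_def distributed_def)
  next
    case Z then show ?thesis using z_dist[of m j b] by (auto simp: is_CN_def distributed_def)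
  next
    case Ph
    then have "\<phi> k j m b \<in> borel_measurable M" using phi_dist[of k m j b] by (auto simp: is_unif_phase_def distributed_def)
    then show ?thesis using Ph by simp
  qed
qed

lemma indep_X: "indep_vars (\<lambda>_. borel) X I"
proof -
  have "indep_sets (\<lambda>i. case i of None \<Rightarrow> sets Ccf
           | Some n \<Rightarrow> {X n -` A \<inter> space M | A. A \<in> sets borel}) (Some ` I)"
    by (rule indep_sets_mono_index[OF _ indep]) auto
  from indep_sets_reindex_Some[OF this]
  have "indep_sets (\<lambda>n. {X n -` A \<inter> space M | A. A \<in> sets borel}) I" by simp
  then show ?thesis unfolding indep_vars_def2 using X_meas by auto
qed

lemma Delta_meas: "k < K \<Longrightarrow> \<Delta> k \<in> borel_measurable M"
  unfolding local_incr_def[abs_def] using g_meas by measurable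

lemma gen_sub: "sets Ft \<union> {\<Delta> k -` A \<inter> space M | k A. k < K \<and> A \<in> sets borel} \<subseteq> Pow (space M)"
  using Ft sets.sets_into_space[of _ Ft] by (auto simp: subalgebra_def)

lemma space_Ccf: "space Ccf = space M"
  unfolding cond_field_def using gen_sub by (simp add: space_measure_of_conv)

lemma sets_Ccf: "sets Ccf = sigma_sets (space M) (sets Ft \<union> {\<Delta> k -` A \<inter> space M | k A. k < K \<and> A \<in> sets borel})"
  unfolding cond_field_def using gen_sub by (simp add: sets_measure_of_conv)

lemma sub_Ccf: "subalgebra M Ccf"
  unfolding subalgebra_def
proof
  show "sets Ccf \<subseteq> sets M"
    unfolding sets_Ccf
  proof (rule sets.sigma_sets_subset)
    show "sets Ft \<union> {\<Delta> k -` A \<inter> space M | k A. k < K \<and> A \<in> sets borel} \<subseteq> sets M"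
      using Ft Delta_meas by (auto simp: subalgebra_def measurable_sets)
  qed
  show "space Ccf = space M" by (rule space_Ccf)
qed

lemma Ft_sub_Ccf: "sets Ft \<subseteq> sets Ccf"
  unfolding sets_Ccf by auto

lemma Delta_meas_Ccf: "k < K \<Longrightarrow> \<Delta> k \<in> borel_measurable Ccf"
proof (rule measurableI)
  fix A :: "(real^'d) set" assume "k < K" "A \<in> sets borel"
  then show "\<Delta> k -` A \<inter> space Ccf \<in> sets Ccf"
    unfolding sets_Ccf space_Ccf by (intro sigma_sets.Basic) blast
qed auto

lemma indep_CN:
  "indep_set (sets Ccf) (sigma_sets (space M) (\<Union>n\<in>I. {X n -` A \<inter> space M | A. A \<in> sets borel}))"
proof -
  define E where "E i = (case i of None \<Rightarrow> sets Ccf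
                       | Some n \<Rightarrow> {X n -` A \<inter> space M | A. A \<in> sets borel})" for i
  define Ib where "Ib b = (if b then {None} else Some ` I)" for b :: bool
  have U: "(\<Union>j\<in>UNIV. Ib j) = insert None (Some ` I)"
    by (auto simp: Ib_def UNIV_bool)
  have ind: "indep_sets E (\<Union>j\<in>UNIV. Ib j)"
    unfolding U E_def by (rule indep)
  have IS: "Int_stable (E i)" for i
  proof (cases i)
    case None
    then show ?thesis unfolding Int_stable_def E_def by (simp add: sets.Int)
  next
    case (Some n)
    have "Int_stable {X n -` A \<inter> space M | A. A \<in> sets (borel::complex measure)}"
    proof (rule Int_stableI)
      fix a b assume "a \<in> {X n -` A \<inter> space M | A. A \<in> sets (borel::complex measure)}"
        "b \<in> {X n -` A \<inter> space M | A. A \<in> sets (borel::complex measure)}"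
      then obtain A B where "a = X n -` A \<inter> space M" "A \<in> sets borel" "b = X n -` B \<inter> space M" "B \<in> sets borel"
        by blast
      then show "a \<inter> b \<in> {X n -` A \<inter> space M | A. A \<in> sets (borel::complex measure)}"
        by (intro CollectI exI[of _ "A \<inter> B"]) auto
    qed
    then show ?thesis by (simp add: Some E_def)
  qed
  have D: "disjoint_family_on Ib UNIV"
    by (auto simp: disjoint_family_on_def Ib_def)
  have ind2: "indep_sets (\<lambda>j. sigma_sets (space M) (\<Union>i\<in>Ib j. E i)) UNIV"
    by (rule indep_sets_collect_sigma[OF ind IS D])
  have e: "(\<lambda>j. sigma_sets (space M) (\<Union>i\<in>Ib j. E i)) =
     case_bool (sets Ccf) (sigma_sets (space M) (\<Union>n\<in>I. {X n -` A \<inter> space M | A. A \<in> sets borel}))"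
  proof (rule ext)
    fix b show "sigma_sets (space M) (\<Union>i\<in>Ib b. E i) = case_bool (sets Ccf) (sigma_sets (space M) (\<Union>n\<in>I. {X n -` A \<inter> space M | A. A \<in> sets borel})) b"
    proof (cases b)
      case True
      then show ?thesis using sets.sigma_sets_eq[of Ccf] by (simp add: Ib_def E_def space_Ccf)
    next
      case False
      then show ?thesis by (simp add: Ib_def E_def)
    qed
  qed
  show ?thesis using ind2 unfolding e indep_set_def .
qed

lemma Nv_meas: "Nv \<in> measurable M (PiM I (\<lambda>_. borel))"
  unfolding Nv_def by (rule measurable_restrict) (rule X_meas)

lemma Nv_sets:
  assumes B: "B \<in> sets (PiM I (\<lambda>_. borel :: complex measure))"
  shows "Nv -` B \<inter> space M \<in> sigma_sets (space M) (\<Union>n\<in>I. {X n -` A \<inter> space M | A. A \<in> sets borel})"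
proof -
  define G where "G = (\<Union>n\<in>I. {X n -` A \<inter> space M | A. A \<in> sets (borel :: complex measure)})"
  have GP: "G \<subseteq> Pow (space M)" by (auto simp: G_def)
  define Ns where "Ns = sigma (space M) G"
  have spN: "space Ns = space M" and seN: "sets Ns = sigma_sets (space M) G"
    using GP by (simp_all add: Ns_def space_measure_of_conv sets_measure_of_conv)
  have "Nv \<in> measurable Ns (PiM I (\<lambda>_. borel))"
    unfolding Nv_def
  proof (rule measurable_restrict)
    fix i assume i: "i \<in> I"
    show "X i \<in> measurable Ns borel"
    proof (rule measurableI)
      fix A :: "complex set" assume "A \<in> sets borel"
      then show "X i -` A \<inter> space Ns \<in> sets Ns"
        unfolding spN seN G_def using i by (intro sigma_sets.Basic) blast
    qed auto
  qed
  from measurable_sets[OF this B] show ?thesis by (simp add: spN seN G_def)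
qed

lemma outer:
  fixes S :: "'s measure" and F :: "'s \<times> ('d noise_idx \<Rightarrow> complex) \<Rightarrow> ennreal"
  assumes V: "V \<in> measurable Ccf S"
    and F: "F \<in> borel_measurable (S \<Otimes>\<^sub>M PiM I (\<lambda>_. borel))"
  shows "(\<integral>\<^sup>+\<omega>. F (V \<omega>, Nv \<omega>) \<partial>M) = (\<integral>\<^sup>+v. (\<integral>\<^sup>+\<omega>. F (v, Nv \<omega>) \<partial>M) \<partial>distr M S V)"
proof -
  let ?T = "PiM I (\<lambda>_. borel :: complex measure)"
  have Vm: "V \<in> measurable M S" by (rule measurable_from_subalg[OF sub_Ccf V])
  note Nm = Nv_meas
  have VN: "(\<lambda>\<omega>. (V \<omega>, Nv \<omega>)) \<in> measurable M (S \<Otimes>\<^sub>M ?T)"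
    using Vm Nm by (rule measurable_Pair)
  interpret PV: prob_space "distr M S V" by (rule prob_space_distr[OF Vm])
  interpret PN: prob_space "distr M ?T Nv" by (rule prob_space_distr[OF Nm])
  interpret PP: pair_sigma_finite "distr M S V" "distr M ?T Nv" ..
  have eq: "distr M S V \<Otimes>\<^sub>M distr M ?T Nv = distr M (S \<Otimes>\<^sub>M ?T) (\<lambda>\<omega>. (V \<omega>, Nv \<omega>))"
  proof (rule pair_measure_eqI)
    show "sigma_finite_measure (distr M S V)" "sigma_finite_measure (distr M ?T Nv)"
      by unfold_locales
    show "sets (distr M S V \<Otimes>\<^sub>M distr M ?T Nv) = sets (distr M (S \<Otimes>\<^sub>M ?T) (\<lambda>\<omega>. (V \<omega>, Nv \<omega>)))"
    proof -
      have "sets (distr M S V \<Otimes>\<^sub>M distr M ?T Nv) = sets (S \<Otimes>\<^sub>M ?T)"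
        by (rule sets_pair_measure_cong) (simp_all only: sets_distr)
      then show ?thesis by (simp only: sets_distr)
    qed
  next
    fix A B assume A: "A \<in> sets (distr M S V)" and B: "B \<in> sets (distr M ?T Nv)"
    then have A': "A \<in> sets S" and B': "B \<in> sets ?T" by auto
    have a: "V -` A \<inter> space M \<in> sets Ccf"
      using measurable_sets[OF V A'] by (simp add: space_Ccf)
    have b: "Nv -` B \<inter> space M \<in> sigma_sets (space M) (\<Union>n\<in>I. {X n -` A \<inter> space M | A. A \<in> sets borel})"
      by (rule Nv_sets[OF B'])
    have pr: "prob ((V -` A \<inter> space M) \<inter> (Nv -` B \<inter> space M)) = prob (V -` A \<inter> space M) * prob (Nv -` B \<inter> space M)"
      by (rule indep_setD[OF indep_CN a b])
    have "emeasure (distr M (S \<Otimes>\<^sub>M ?T) (\<lambda>\<omega>. (V \<omega>, Nv \<omega>))) (A \<times> B) =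
        emeasure M ((\<lambda>\<omega>. (V \<omega>, Nv \<omega>)) -` (A \<times> B) \<inter> space M)"
      using A' B' by (intro emeasure_distr[OF VN]) auto
    also have "(\<lambda>\<omega>. (V \<omega>, Nv \<omega>)) -` (A \<times> B) \<inter> space M = (V -` A \<inter> space M) \<inter> (Nv -` B \<inter> space M)"
      by auto
    also have "emeasure M \<dots> = emeasure M (V -` A \<inter> space M) * emeasure M (Nv -` B \<inter> space M)"
      using pr by (simp add: emeasure_eq_measure measure_nonneg ennreal_mult)
    also have "\<dots> = emeasure (distr M S V) A * emeasure (distr M ?T Nv) B"
      using A' B' Vm Nm by (simp add: emeasure_distr)
    finally show "emeasure (distr M S V) A * emeasure (distr M ?T Nv) B =
        emeasure (distr M (S \<Otimes>\<^sub>M ?T) (\<lambda>\<omega>. (V \<omega>, Nv \<omega>))) (A \<times> B)" by simp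
  qed
  have "(\<integral>\<^sup>+\<omega>. F (V \<omega>, Nv \<omega>) \<partial>M) = (\<integral>\<^sup>+p. F p \<partial>distr M (S \<Otimes>\<^sub>M ?T) (\<lambda>\<omega>. (V \<omega>, Nv \<omega>)))"
    using F VN by (subst nn_integral_distr) auto
  also have "\<dots> = (\<integral>\<^sup>+p. F p \<partial>(distr M S V \<Otimes>\<^sub>M distr M ?T Nv))"
    unfolding eq ..
  also have "\<dots> = (\<integral>\<^sup>+v. (\<integral>\<^sup>+n. F (v, n) \<partial>distr M ?T Nv) \<partial>distr M S V)"
  proof -
    have SE: "sets (distr M S V \<Otimes>\<^sub>M distr M ?T Nv) = sets (S \<Otimes>\<^sub>M ?T)"
      by (rule sets_pair_measure_cong) (simp_all only: sets_distr)
    have F': "F \<in> borel_measurable (distr M S V \<Otimes>\<^sub>M distr M ?T Nv)"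
      using F by (subst measurable_cong_sets[OF SE refl])
    show ?thesis by (rule PN.nn_integral_fst[OF F', symmetric])
  qed
  also have "\<dots> = (\<integral>\<^sup>+v. (\<integral>\<^sup>+\<omega>. F (v, Nv \<omega>) \<partial>M) \<partial>distr M S V)"
  proof (rule nn_integral_cong)
    fix v assume "v \<in> space (distr M S V)"
    then have v: "v \<in> space S" by simp
    have "(\<lambda>n. F (v, n)) \<in> borel_measurable ?T" using measurable_Pair2[OF F v] .
    then show "(\<integral>\<^sup>+n. F (v, n) \<partial>distr M ?T Nv) = (\<integral>\<^sup>+\<omega>. F (v, Nv \<omega>) \<partial>M)"
      using Nm by (subst nn_integral_distr) auto
  qed
  finally show ?thesis .
qed

end

definition Yn :: "real \<Rightarrow> (nat \<Rightarrow> real) \<Rightarrow> (nat \<Rightarrow> real) \<Rightarrow> nat \<Rightarrow> (nat \<Rightarrow> real^'d) \<Rightarrow> 'd \<Rightarrow> nat \<Rightarrow> bool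
   \<Rightarrow> ('d noise_idx \<Rightarrow> complex) \<Rightarrow> complex" where
  "Yn \<eta> c \<mu> K \<delta> j m b n =
    (\<Sum>k<K. n (Hidx k j m b) * (complex_of_real (sqrt (\<eta> * c m * branch_part b ((1 / real K) * (\<delta> k $ j))) / \<mu> k)
       * cis (Re (n (Phidx k j m b))))) + n (Zidx j m b)"

definition grp :: "nat \<Rightarrow> 'd \<Rightarrow> nat \<Rightarrow> bool \<Rightarrow> 'd noise_idx set" where
  "grp K j m b = {Zidx j m b} \<union> {Hidx k j m b | k. k < K} \<union> {Phidx k j m b | k. k < K}"

lemma mcisRe[measurable]: "(\<lambda>x::complex. cis (Re x)) \<in> borel_measurable borel"
  by (intro borel_measurable_continuous_onI continuous_intros)
lemma mcis[measurable]: "cis \<in> borel_measurable borel"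
  by (intro borel_measurable_continuous_onI continuous_intros)

lemma Yn_cong:
  assumes "\<And>k. k < K \<Longrightarrow> n (Hidx k j m b) = n' (Hidx k j m b)"
    "\<And>k. k < K \<Longrightarrow> n (Phidx k j m b) = n' (Phidx k j m b)" "n (Zidx j m b) = n' (Zidx j m b)"
  shows "Yn \<eta> c \<mu> K \<delta> j m b n = Yn \<eta> c \<mu> K \<delta> j m b n'"
  unfolding Yn_def using assms by simp

lemma Yn_meas:
  assumes "grp K j m b \<subseteq> G"
  shows "Yn \<eta> c \<mu> K \<delta> j m b \<in> borel_measurable (PiM G (\<lambda>_. borel :: complex measure))"
proof -
  have H: "k < K \<Longrightarrow> (\<lambda>n. n (Hidx k j m b)) \<in> borel_measurable (PiM G (\<lambda>_. borel :: complex measure))" for k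
    by (rule measurable_component_singleton) (use assms in \<open>auto simp: grp_def\<close>)
  have Ph: "k < K \<Longrightarrow> (\<lambda>n. n (Phidx k j m b)) \<in> borel_measurable (PiM G (\<lambda>_. borel :: complex measure))" for k
    by (rule measurable_component_singleton) (use assms in \<open>auto simp: grp_def\<close>)
  have Z: "(\<lambda>n. n (Zidx j m b)) \<in> borel_measurable (PiM G (\<lambda>_. borel :: complex measure))"
    by (rule measurable_component_singleton) (use assms in \<open>auto simp: grp_def\<close>)
  have S: "(\<lambda>n. \<Sum>k<K. n (Hidx k j m b) * (complex_of_real (sqrt (\<eta> * c m * branch_part b ((1 / real K) * (\<delta> k $ j))) / \<mu> k)
       * cis (Re (n (Phidx k j m b))))) \<in> borel_measurable (PiM G (\<lambda>_. borel :: complex measure))"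
  proof (rule borel_measurable_sum)
    fix k assume "k \<in> {..<K}"
    then have h1: "(\<lambda>n. n (Hidx k j m b)) \<in> borel_measurable (PiM G (\<lambda>_. borel :: complex measure))"
      and h2: "(\<lambda>n. n (Phidx k j m b)) \<in> borel_measurable (PiM G (\<lambda>_. borel :: complex measure))"
      using H Ph by auto
    have h3: "(\<lambda>n. cis (Re (n (Phidx k j m b)))) \<in> borel_measurable (PiM G (\<lambda>_. borel :: complex measure))"
      using measurable_compose[OF h2 mcisRe] .
    show "(\<lambda>n. n (Hidx k j m b) * (complex_of_real (sqrt (\<eta> * c m * branch_part b ((1 / real K) * (\<delta> k $ j))) / \<mu> k)
       * cis (Re (n (Phidx k j m b))))) \<in> borel_measurable (PiM G (\<lambda>_. borel :: complex measure))"
      by (intro borel_measurable_times h1 h3 borel_measurable_const)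
  qed
  show ?thesis unfolding Yn_def[abs_def] by (intro borel_measurable_add S Z)
qed

context reed_setup
begin

interpretation prob_space M by (rule P)

definition lam :: "(nat \<Rightarrow> real^'d) \<Rightarrow> 'd \<Rightarrow> nat \<Rightarrow> bool \<Rightarrow> real" where
  "lam \<delta> j m b = (\<Sum>k<K. \<eta> * c m * branch_part b ((1 / real K) * (\<delta> k $ j))) + \<sigma>z2"

lemma H_in_I: "k < K \<Longrightarrow> m < Mc \<Longrightarrow> Hidx k j m b \<in> I"
  unfolding noise_idx_set_def by blast
lemma Z_in_I: "m < Mc \<Longrightarrow> Zidx j m b \<in> I"
  unfolding noise_idx_set_def by blast
lemma Ph_in_I: "k < K \<Longrightarrow> m < Mc \<Longrightarrow> Phidx k j m b \<in> I"
  unfolding noise_idx_set_def by blast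

lemma grp_I: "m < Mc \<Longrightarrow> grp K j m b \<subseteq> I"
  by (auto simp: grp_def noise_idx_set_def)

lemma Nv_H: "k < K \<Longrightarrow> m < Mc \<Longrightarrow> Nv \<omega> (Hidx k j m b) = h k j m b \<omega>"
  by (auto simp: Nv_def noise_idx_set_def)
lemma Nv_Z: "m < Mc \<Longrightarrow> Nv \<omega> (Zidx j m b) = z j m b \<omega>"
  by (auto simp: Nv_def noise_idx_set_def)
lemma Nv_Ph: "k < K \<Longrightarrow> m < Mc \<Longrightarrow> Nv \<omega> (Phidx k j m b) = complex_of_real (\<phi> k j m b \<omega>)"
  by (auto simp: Nv_def noise_idx_set_def)

lemma Yn_Nv: "m < Mc \<Longrightarrow> Yn \<eta> c \<mu> K \<delta> j m b (Nv \<omega>) =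
    (\<Sum>k<K. h k j m b \<omega> * (complex_of_real (sqrt (\<eta> * c m * branch_part b ((1 / real K) * (\<delta> k $ j))) / \<mu> k)
       * cis (\<phi> k j m b \<omega>))) + z j m b \<omega>"
  unfolding Yn_def by (simp add: Nv_H Nv_Z Nv_Ph)

lemma Yn_restrict: "m < Mc \<Longrightarrow> Yn \<eta> c \<mu> K \<delta> j m b (restrict (\<lambda>i. X i \<omega>) (grp K j m b)) = Yn \<eta> c \<mu> K \<delta> j m b (Nv \<omega>)"
  by (rule Yn_cong) (auto simp: grp_def Nv_def noise_idx_set_def)

lemma bp_nonneg: "branch_part b x \<ge> 0"
  by (auto simp: branch_part_def ppart_def npart_def)

lemma inner_good:
  assumes m: "m < Mc"
  shows "circ_good M (\<lambda>\<omega>. Yn \<eta> c \<mu> K \<delta> j m b (Nv \<omega>)) (lam \<delta> j m b)"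
proof -
  define r where "r k = sqrt (\<eta> * c m * branch_part b ((1 / real K) * (\<delta> k $ j))) / \<mu> k" for k
  define J where "J = insert None (Some ` {..<K})"
  define T where "T x = (case x of None \<Rightarrow> (\<lambda>\<omega>. z j m b \<omega>)
     | Some k \<Rightarrow> (\<lambda>\<omega>. h k j m b \<omega> * (complex_of_real (r k) * cis (\<phi> k j m b \<omega>))))" for x
  define s where "s x = (case x of None \<Rightarrow> \<sigma>z2 | Some k \<Rightarrow> \<eta> * c m * branch_part b ((1 / real K) * (\<delta> k $ j)))" for x
  define Gr where "Gr x = (case x of None \<Rightarrow> {Zidx j m b} | Some k \<Rightarrow> {Hidx k j m b, Phidx k j m b})" for x
  define f where "f x = (case x of None \<Rightarrow> (\<lambda>n. n (Zidx j m b))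
     | Some k \<Rightarrow> (\<lambda>n. n (Hidx k j m b) * (complex_of_real (r k) * cis (Re (n (Phidx k j m b))))))" for x
  have indT: "indep_vars (\<lambda>_. borel) T J"
  proof -
    have "indep_vars (\<lambda>_. borel) (\<lambda>x \<omega>. f x (restrict (\<lambda>i. X i \<omega>) (Gr x))) J"
    proof (rule indep_vars_groups[OF indep_X])
      fix x assume "x \<in> J" then show "Gr x \<subseteq> I" using m by (auto simp: J_def Gr_def H_in_I Z_in_I Ph_in_I)
    next
      show "disjoint_family_on Gr J" by (auto simp: disjoint_family_on_def J_def Gr_def)
    next
      fix x assume "x \<in> J"
      show "f x \<in> borel_measurable (PiM (Gr x) (\<lambda>_. borel))"
      proof (cases x)
        case None then show ?thesis by (auto simp: f_def Gr_def intro!: measurable_component_singleton)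
      next
        case (Some k)
        have h1: "(\<lambda>n. n (Hidx k j m b)) \<in> borel_measurable (PiM (Gr x) (\<lambda>_. borel :: complex measure))"
          by (rule measurable_component_singleton) (simp add: Some Gr_def)
        have h2: "(\<lambda>n. n (Phidx k j m b)) \<in> borel_measurable (PiM (Gr x) (\<lambda>_. borel :: complex measure))"
          by (rule measurable_component_singleton) (simp add: Some Gr_def)
        have h3: "(\<lambda>n. cis (Re (n (Phidx k j m b)))) \<in> borel_measurable (PiM (Gr x) (\<lambda>_. borel :: complex measure))"
          using measurable_compose[OF h2 mcisRe] .
        have "(\<lambda>n. n (Hidx k j m b) * (complex_of_real (r k) * cis (Re (n (Phidx k j m b)))))
            \<in> borel_measurable (PiM (Gr x) (\<lambda>_. borel :: complex measure))"
          by (intro borel_measurable_times h1 h3 borel_measurable_const)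
        then show ?thesis by (simp add: f_def Some)
      qed
    qed
    moreover have "\<And>x. x \<in> J \<Longrightarrow> (\<lambda>\<omega>. f x (restrict (\<lambda>i. X i \<omega>) (Gr x))) = T x"
      by (auto simp: f_def T_def Gr_def J_def fun_eq_iff)
    ultimately show ?thesis
      by (subst indep_vars_cong[where X=T and Y="\<lambda>x \<omega>. f x (restrict (\<lambda>i. X i \<omega>) (Gr x))" and N'="\<lambda>_. borel"]) auto
  qed
  have gT: "circ_good M (T x) (s x)" if x: "x \<in> J" for x
  proof (cases x)
    case None
    then show ?thesis using CN_good[OF P z_dist[OF m] sz] by (simp add: T_def s_def)
  next
    case (Some k)
    then have k: "k < K" using x by (auto simp: J_def)
    have mu2: "(\<mu> k)\<^sup>2 > 0" using mu[OF k] by simp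
    have hg: "circ_good M (h k j m b) ((\<mu> k)\<^sup>2)" using CN_good[OF P h_dist[OF k m] mu2] .
    have iv0: "indep_var borel (\<lambda>\<omega>. (\<lambda>n. n (Hidx k j m b)) (restrict (\<lambda>i. X i \<omega>) {Hidx k j m b}))
        borel (\<lambda>\<omega>. (\<lambda>n. cis (Re (n (Phidx k j m b)))) (restrict (\<lambda>i. X i \<omega>) {Phidx k j m b}))"
    proof (rule indep_groups[OF indep_X])
      show "{Hidx k j m b} \<inter> {Phidx k j m b} = {}" by simp
      show "{Hidx k j m b} \<subseteq> I" "{Phidx k j m b} \<subseteq> I" using k m by (auto simp: H_in_I Ph_in_I)
      show "(\<lambda>n. n (Hidx k j m b)) \<in> borel_measurable (PiM {Hidx k j m b} (\<lambda>_. borel))"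
        by (rule measurable_component_singleton) simp
      have "(\<lambda>n. n (Phidx k j m b)) \<in> borel_measurable (PiM {Phidx k j m b} (\<lambda>_. borel :: complex measure))"
        by (rule measurable_component_singleton) simp
      from measurable_compose[OF this mcisRe]
      show "(\<lambda>n. cis (Re (n (Phidx k j m b)))) \<in> borel_measurable (PiM {Phidx k j m b} (\<lambda>_. borel))" .
    qed
    have iv: "indep_var borel (h k j m b) borel (\<lambda>\<omega>. cis (\<phi> k j m b \<omega>))"
      using iv0 by simp
    have phm: "\<phi> k j m b \<in> borel_measurable M"
      using phi_dist[OF k m, of j b] by (auto simp: is_unif_phase_def distributed_def)
    have cm: "(\<lambda>\<omega>. cis (\<phi> k j m b \<omega>)) \<in> borel_measurable M"
      using measurable_compose[OF phm mcis] .
    have g2: "circ_good M (\<lambda>\<omega>. h k j m b \<omega> * cis (\<phi> k j m b \<omega>)) ((\<mu> k)\<^sup>2)"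
      by (rule good_phase[OF P hg cm _ iv]) simp
    have g3: "circ_good M (\<lambda>\<omega>. complex_of_real (r k) * (h k j m b \<omega> * cis (\<phi> k j m b \<omega>))) ((r k)\<^sup>2 * (\<mu> k)\<^sup>2)"
      by (rule good_scale[OF P g2])
    have nn: "\<eta> * c m * branch_part b ((1 / real K) * (\<delta> k $ j)) \<ge> 0"
      using eta c_nonneg[OF m] bp_nonneg by simp
    have rr: "(r k)\<^sup>2 * (\<mu> k)\<^sup>2 = s x"
      using mu[OF k] nn by (simp add: r_def s_def Some power_divide)
    have fe: "(\<lambda>\<omega>. complex_of_real (r k) * (h k j m b \<omega> * cis (\<phi> k j m b \<omega>))) = T x"
      by (simp add: T_def Some fun_eq_iff mult_ac)
    show ?thesis using g3 unfolding fe rr .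
  qed
  have fJ: "finite J" by (simp add: J_def)
  have G: "circ_good M (\<lambda>\<omega>. \<Sum>x\<in>J. T x \<omega>) (\<Sum>x\<in>J. s x)"
    by (rule good_sum[OF P fJ indT gT])
  have e1: "(\<lambda>\<omega>. \<Sum>x\<in>J. T x \<omega>) = (\<lambda>\<omega>. Yn \<eta> c \<mu> K \<delta> j m b (Nv \<omega>))"
    by (simp add: J_def sum.reindex T_def Yn_Nv[OF m] r_def fun_eq_iff add.commute)
  have e2: "(\<Sum>x\<in>J. s x) = lam \<delta> j m b"
    by (simp add: J_def sum.reindex s_def lam_def add.commute)
  show ?thesis using G unfolding e1 e2 .
qed

end

lemma good_moments:
  assumes P: "prob_space M" and G: "circ_good M Y s"
  shows "integrable M (\<lambda>\<omega>. (cmod (Y \<omega>))\<^sup>2)" "(\<integral>\<omega>. (cmod (Y \<omega>))\<^sup>2 \<partial>M) = s"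
    "integrable M (\<lambda>\<omega>. (cmod (Y \<omega>))^4)" "(\<integral>\<omega>. (cmod (Y \<omega>))^4 \<partial>M) = 2 * s\<^sup>2"
proof -
  interpret prob_space M by fact
  have Ym[measurable]: "Y \<in> borel_measurable M" using G by (simp add: circ_good_def)
  have i2: "integrable M (\<lambda>\<omega>. (Re (Y \<omega>))\<^sup>2)" "integrable M (\<lambda>\<omega>. (Im (Y \<omega>))\<^sup>2)"
    using good_int[OF P G mRe2 bRe2 n24] good_int[OF P G mIm2 bIm2 n24] by auto
  show "integrable M (\<lambda>\<omega>. (cmod (Y \<omega>))\<^sup>2)" using good_int[OF P G mP bP n24] .
  have "(\<integral>\<omega>. (cmod (Y \<omega>))\<^sup>2 \<partial>M) = (\<integral>\<omega>. (Re (Y \<omega>))\<^sup>2 + (Im (Y \<omega>))\<^sup>2 \<partial>M)"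
    by (simp add: cmod_power2)
  also have "\<dots> = s" using i2 G by (simp add: circ_good_def)
  finally show "(\<integral>\<omega>. (cmod (Y \<omega>))\<^sup>2 \<partial>M) = s" .
  show "integrable M (\<lambda>\<omega>. (cmod (Y \<omega>))^4)" "(\<integral>\<omega>. (cmod (Y \<omega>))^4 \<partial>M) = 2 * s\<^sup>2"
    using G by (simp_all add: circ_good_def)
qed

context reed_setup
begin

interpretation prob_space M by (rule P)

abbreviation "CC \<equiv> (\<Sum>m<Mc. c m)"

definition Wf :: "(nat \<Rightarrow> real^'d) \<Rightarrow> 'd \<Rightarrow> nat \<times> bool \<Rightarrow> ('d noise_idx \<Rightarrow> complex) \<Rightarrow> real" where
  "Wf \<delta> j p n = (if snd p then 1 else -1) *
     ((cmod (Yn \<eta> c \<mu> K \<delta> j (fst p) (snd p) n))\<^sup>2 - lam \<delta> j (fst p) (snd p))"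

lemma Wf_meas: "fst p < Mc \<Longrightarrow> Wf \<delta> j p \<in> borel_measurable (PiM (grp K j (fst p) (snd p)) (\<lambda>_. borel))"
  unfolding Wf_def[abs_def] using Yn_meas[of K j "fst p" "snd p" "grp K j (fst p) (snd p)" \<eta> c \<mu> \<delta>]
  by measurable

lemma Wf_restrict: "fst p < Mc \<Longrightarrow> Wf \<delta> j p (restrict (\<lambda>i. X i \<omega>) (grp K j (fst p) (snd p))) = Wf \<delta> j p (Nv \<omega>)"
  unfolding Wf_def using Yn_restrict by simp

lemma Wf_mom:
  assumes p: "fst p < Mc"
  shows "integrable M (\<lambda>\<omega>. Wf \<delta> j p (Nv \<omega>))" "(\<integral>\<omega>. Wf \<delta> j p (Nv \<omega>) \<partial>M) = 0"
    "integrable M (\<lambda>\<omega>. (Wf \<delta> j p (Nv \<omega>))\<^sup>2)" "(\<integral>\<omega>. (Wf \<delta> j p (Nv \<omega>))\<^sup>2 \<partial>M) = (lam \<delta> j (fst p) (snd p))\<^sup>2"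
proof -
  let ?Y = "\<lambda>\<omega>. Yn \<eta> c \<mu> K \<delta> j (fst p) (snd p) (Nv \<omega>)"
  let ?l = "lam \<delta> j (fst p) (snd p)"
  note G = inner_good[OF p, of \<delta> j "snd p"]
  note mo = good_moments[OF P G]
  have sq: "(Wf \<delta> j p (Nv \<omega>))\<^sup>2 = (cmod (?Y \<omega>))^4 - 2 * ?l * (cmod (?Y \<omega>))\<^sup>2 + ?l\<^sup>2" for \<omega>
    by (simp add: Wf_def power2_eq_square algebra_simps power4_eq_xxxx)
  show i1: "integrable M (\<lambda>\<omega>. Wf \<delta> j p (Nv \<omega>))" using mo(1) by (simp add: Wf_def)
  show "(\<integral>\<omega>. Wf \<delta> j p (Nv \<omega>) \<partial>M) = 0" using mo(1,2) by (simp add: Wf_def prob_space)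
  show "integrable M (\<lambda>\<omega>. (Wf \<delta> j p (Nv \<omega>))\<^sup>2)" unfolding sq using mo(1,3) by simp
  show "(\<integral>\<omega>. (Wf \<delta> j p (Nv \<omega>))\<^sup>2 \<partial>M) = ?l\<^sup>2" unfolding sq using mo by (simp add: prob_space power2_eq_square)
qed


lemma grp_disj: "(m, b) \<noteq> (m', b') \<Longrightarrow> grp K j m b \<inter> grp K j m' b' = {}"
  by (auto simp: grp_def)

lemma Wf_cross:
  assumes p: "fst p < Mc" and q: "fst q < Mc" and pq: "p \<noteq> q"
  shows "integrable M (\<lambda>\<omega>. Wf \<delta> j p (Nv \<omega>) * Wf \<delta> j q (Nv \<omega>))"
    "(\<integral>\<omega>. Wf \<delta> j p (Nv \<omega>) * Wf \<delta> j q (Nv \<omega>) \<partial>M) = 0"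
proof -
  have d: "grp K j (fst p) (snd p) \<inter> grp K j (fst q) (snd q) = {}"
    using pq by (intro grp_disj) (simp add: prod_eq_iff)
  have iv0: "indep_var borel (\<lambda>\<omega>. Wf \<delta> j p (restrict (\<lambda>i. X i \<omega>) (grp K j (fst p) (snd p))))
     borel (\<lambda>\<omega>. Wf \<delta> j q (restrict (\<lambda>i. X i \<omega>) (grp K j (fst q) (snd q))))"
    by (rule indep_groups[OF indep_X d grp_I[OF p] grp_I[OF q] Wf_meas[OF p] Wf_meas[OF q]])
  have iv: "indep_var borel (\<lambda>\<omega>. Wf \<delta> j p (Nv \<omega>)) borel (\<lambda>\<omega>. Wf \<delta> j q (Nv \<omega>))"
    using iv0 by (simp add: Wf_restrict p q)
  show "integrable M (\<lambda>\<omega>. Wf \<delta> j p (Nv \<omega>) * Wf \<delta> j q (Nv \<omega>))"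
    by (rule indep_var_integrable[OF iv Wf_mom(1)[OF p] Wf_mom(1)[OF q]])
  show "(\<integral>\<omega>. Wf \<delta> j p (Nv \<omega>) * Wf \<delta> j q (Nv \<omega>) \<partial>M) = 0"
    using indep_var_lebesgue_integral[OF iv Wf_mom(1)[OF p] Wf_mom(1)[OF q]] Wf_mom(2)[OF p] by simp
qed

definition Ej :: "(nat \<Rightarrow> real^'d) \<Rightarrow> 'd \<Rightarrow> ('d noise_idx \<Rightarrow> complex) \<Rightarrow> real" where
  "Ej \<delta> j n = (1 / (\<eta> * CC)) * (\<Sum>m<Mc. (cmod (Yn \<eta> c \<mu> K \<delta> j m True n))\<^sup>2 - (cmod (Yn \<eta> c \<mu> K \<delta> j m False n))\<^sup>2)
     - (1 / real K) * (\<Sum>k<K. \<delta> k $ j)"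

lemma pp_np: "branch_part True x - branch_part False x = x"
  by (simp add: branch_part_def ppart_def npart_def max_def)

lemma lam_diff: "(\<Sum>m<Mc. lam \<delta> j m True - lam \<delta> j m False) = \<eta> * CC * ((1 / real K) * (\<Sum>k<K. \<delta> k $ j))"
proof -
  have "lam \<delta> j m True - lam \<delta> j m False = \<eta> * c m * (\<Sum>k<K. (1 / real K) * (\<delta> k $ j))" for m
  proof -
    have "lam \<delta> j m True - lam \<delta> j m False = (\<Sum>k<K. \<eta> * c m * (branch_part True ((1 / real K) * (\<delta> k $ j)) - branch_part False ((1 / real K) * (\<delta> k $ j))))"
      by (simp add: lam_def sum_subtractf[symmetric] algebra_simps)
    also have "\<dots> = \<eta> * c m * (\<Sum>k<K. (1 / real K) * (\<delta> k $ j))"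
      by (simp add: pp_np sum_distrib_left)
    finally show ?thesis .
  qed
  then have "(\<Sum>m<Mc. lam \<delta> j m True - lam \<delta> j m False) = (\<Sum>m<Mc. \<eta> * c m * (\<Sum>k<K. (1 / real K) * (\<delta> k $ j)))"
    by simp
  also have "\<dots> = \<eta> * CC * ((1 / real K) * (\<Sum>k<K. \<delta> k $ j))"
    by (simp add: sum_distrib_left[symmetric] sum_distrib_right[symmetric] sum_divide_distrib[symmetric] mult_ac)
  finally show ?thesis .
qed

abbreviation "PP \<equiv> {..<Mc} \<times> (UNIV :: bool set)"

lemma sum_PP: "(\<Sum>p\<in>PP. F p) = (\<Sum>m<Mc. F (m, True) + F (m, False))"
proof -
  have "(\<Sum>p\<in>PP. F p) = (\<Sum>m<Mc. \<Sum>b\<in>UNIV. F (m, b))"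
    by (simp add: sum.cartesian_product)
  also have "\<dots> = (\<Sum>m<Mc. F (m, True) + F (m, False))"
    by (simp add: UNIV_bool add.commute)
  finally show ?thesis .
qed

lemma Ej_W: "Ej \<delta> j n = (1 / (\<eta> * CC)) * (\<Sum>p\<in>PP. Wf \<delta> j p n)"
proof -
  have etaC: "\<eta> * CC \<noteq> 0" using eta C_pos by simp
  have "(\<Sum>p\<in>PP. Wf \<delta> j p n) = (\<Sum>m<Mc. Wf \<delta> j (m, True) n + Wf \<delta> j (m, False) n)"
    by (rule sum_PP)
  also have "\<dots> = (\<Sum>m<Mc. (cmod (Yn \<eta> c \<mu> K \<delta> j m True n))\<^sup>2 - (cmod (Yn \<eta> c \<mu> K \<delta> j m False n))\<^sup>2)
      - (\<Sum>m<Mc. lam \<delta> j m True - lam \<delta> j m False)"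
    by (simp add: Wf_def sum_subtractf[symmetric] algebra_simps)
  finally show ?thesis
    unfolding Ej_def lam_diff using etaC by (simp add: field_simps)
qed

lemma Ej_sq:
  shows "integrable M (\<lambda>\<omega>. (Ej \<delta> j (Nv \<omega>))\<^sup>2)"
    "(\<integral>\<omega>. (Ej \<delta> j (Nv \<omega>))\<^sup>2 \<partial>M) = (1 / (\<eta> * CC))\<^sup>2 * (\<Sum>m<Mc. (lam \<delta> j m True)\<^sup>2 + (lam \<delta> j m False)\<^sup>2)"
proof -
  have e: "(Ej \<delta> j (Nv \<omega>))\<^sup>2 = (1 / (\<eta> * CC))\<^sup>2 * (\<Sum>p\<in>PP. \<Sum>q\<in>PP. Wf \<delta> j p (Nv \<omega>) * Wf \<delta> j q (Nv \<omega>))" for \<omega>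
    unfolding Ej_W by (simp add: power2_eq_square sum_product)
  have ipq: "integrable M (\<lambda>\<omega>. Wf \<delta> j p (Nv \<omega>) * Wf \<delta> j q (Nv \<omega>))" if "p \<in> PP" "q \<in> PP" for p q
  proof (cases "p = q")
    case True then show ?thesis using Wf_mom(3)[of p \<delta> j] that by (auto simp: power2_eq_square)
  next
    case False then show ?thesis using Wf_cross(1)[of p q \<delta> j] that by auto
  qed
  have vpq: "(\<integral>\<omega>. Wf \<delta> j p (Nv \<omega>) * Wf \<delta> j q (Nv \<omega>) \<partial>M) = (if p = q then (lam \<delta> j (fst p) (snd p))\<^sup>2 else 0)"
    if "p \<in> PP" "q \<in> PP" for p q
  proof (cases "p = q")
    case True then show ?thesis using Wf_mom(4)[of p \<delta> j] that by (auto simp: power2_eq_square)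
  next
    case False then show ?thesis using Wf_cross(2)[of p q \<delta> j] that by auto
  qed
  show "integrable M (\<lambda>\<omega>. (Ej \<delta> j (Nv \<omega>))\<^sup>2)"
    unfolding e using ipq by (intro integrable_mult_right integrable_sum) auto
  have "(\<integral>\<omega>. (Ej \<delta> j (Nv \<omega>))\<^sup>2 \<partial>M) = (1 / (\<eta> * CC))\<^sup>2 * (\<Sum>p\<in>PP. \<Sum>q\<in>PP. (\<integral>\<omega>. Wf \<delta> j p (Nv \<omega>) * Wf \<delta> j q (Nv \<omega>) \<partial>M))"
    unfolding e using ipq by (simp add: integral_sum integrable_sum)
  also have "\<dots> = (1 / (\<eta> * CC))\<^sup>2 * (\<Sum>p\<in>PP. (lam \<delta> j (fst p) (snd p))\<^sup>2)"
  proof -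
    have "(\<Sum>p\<in>PP. \<Sum>q\<in>PP. (\<integral>\<omega>. Wf \<delta> j p (Nv \<omega>) * Wf \<delta> j q (Nv \<omega>) \<partial>M))
       = (\<Sum>p\<in>PP. \<Sum>q\<in>PP. (if p = q then (lam \<delta> j (fst p) (snd p))\<^sup>2 else 0))"
      by (intro sum.cong refl) (simp add: vpq)
    also have "\<dots> = (\<Sum>p\<in>PP. (lam \<delta> j (fst p) (snd p))\<^sup>2)"
      by (intro sum.cong refl) (simp add: sum.delta)
    finally show ?thesis by simp
  qed
  also have "(\<Sum>p\<in>PP. (lam \<delta> j (fst p) (snd p))\<^sup>2) = (\<Sum>m<Mc. (lam \<delta> j m True)\<^sup>2 + (lam \<delta> j m False)\<^sup>2)"
    by (simp add: sum_PP)
  finally show "(\<integral>\<omega>. (Ej \<delta> j (Nv \<omega>))\<^sup>2 \<partial>M) = (1 / (\<eta> * CC))\<^sup>2 * (\<Sum>m<Mc. (lam \<delta> j m True)\<^sup>2 + (lam \<delta> j m False)\<^sup>2)" .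
qed

end

lemma normsq_vec: "(norm (x::real^'n))\<^sup>2 = (\<Sum>j\<in>UNIV. (x $ j)\<^sup>2)"
  by (simp add: norm_vec_def L2_set_def sum_nonneg)

lemma l1_le_sqrt_card: "(\<Sum>j\<in>UNIV. \<bar>(x::real^'n) $ j\<bar>) \<le> sqrt (real CARD('n)) * norm x"
proof -
  have "(\<Sum>j\<in>UNIV. \<bar>x $ j\<bar>)\<^sup>2 \<le> (\<Sum>j\<in>UNIV. (\<bar>x $ j\<bar>)\<^sup>2) * real CARD('n)"
    by (rule sum_squared_le_sum_of_squares)
  also have "\<dots> = (sqrt (real CARD('n)) * norm x)\<^sup>2"
    by (simp add: power_mult_distrib normsq_vec mult.commute)
  finally show ?thesis
    by (rule power2_le_imp_le) simp
qed

lemma A_bounds: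
  fixes \<delta> :: "nat \<Rightarrow> real^'n"
  assumes K: "K \<ge> 1" and B: "\<And>k. k < K \<Longrightarrow> norm (\<delta> k) \<le> B0"
  shows "(\<Sum>j\<in>UNIV. ((1 / real K) * (\<Sum>k<K. \<bar>\<delta> k $ j\<bar>))\<^sup>2) \<le> B0\<^sup>2"
    "(\<Sum>j\<in>UNIV. (1 / real K) * (\<Sum>k<K. \<bar>\<delta> k $ j\<bar>)) \<le> sqrt (real CARD('n)) * B0"
proof -
  have B0: "B0 \<ge> 0" using B[of 0] K by (meson norm_ge_zero order_trans less_le_trans zero_less_one le_less_trans) 
  have Kp: "real K > 0" using K by simp
  have "(\<Sum>j\<in>UNIV. ((1 / real K) * (\<Sum>k<K. \<bar>\<delta> k $ j\<bar>))\<^sup>2) \<le> (\<Sum>j\<in>UNIV. (1 / real K) * (\<Sum>k<K. (\<delta> k $ j)\<^sup>2))"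
  proof (rule sum_mono)
    fix j
    have "(\<Sum>k<K. \<bar>\<delta> k $ j\<bar>)\<^sup>2 \<le> (\<Sum>k<K. (\<bar>\<delta> k $ j\<bar>)\<^sup>2) * real K"
      using sum_squared_le_sum_of_squares[of "\<lambda>k. \<bar>\<delta> k $ j\<bar>" "{..<K}"] by simp
    then have "(1 / real K)\<^sup>2 * (\<Sum>k<K. \<bar>\<delta> k $ j\<bar>)\<^sup>2 \<le> (1 / real K)\<^sup>2 * ((\<Sum>k<K. (\<delta> k $ j)\<^sup>2) * real K)"
      by (intro mult_left_mono) auto
    also have "\<dots> = (1 / real K) * (\<Sum>k<K. (\<delta> k $ j)\<^sup>2)" using Kp by (simp add: power2_eq_square field_simps)
    finally show "((1 / real K) * (\<Sum>k<K. \<bar>\<delta> k $ j\<bar>))\<^sup>2 \<le> (1 / real K) * (\<Sum>k<K. (\<delta> k $ j)\<^sup>2)"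
      by (simp add: power_mult_distrib power_divide)
  qed
  also have "\<dots> = (1 / real K) * (\<Sum>k<K. (norm (\<delta> k))\<^sup>2)"
    by (simp add: normsq_vec sum_distrib_left[symmetric] sum.swap[of _ UNIV] sum_divide_distrib[symmetric])
  also have "\<dots> \<le> (1 / real K) * (\<Sum>k<K. B0\<^sup>2)"
    using B by (intro mult_left_mono sum_mono power_mono) auto
  also have "\<dots> = B0\<^sup>2" using Kp by simp
  finally show "(\<Sum>j\<in>UNIV. ((1 / real K) * (\<Sum>k<K. \<bar>\<delta> k $ j\<bar>))\<^sup>2) \<le> B0\<^sup>2" .
  have "(\<Sum>j\<in>UNIV. (1 / real K) * (\<Sum>k<K. \<bar>\<delta> k $ j\<bar>)) = (1 / real K) * (\<Sum>k<K. \<Sum>j\<in>UNIV. \<bar>\<delta> k $ j\<bar>)"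
    by (simp add: sum_distrib_left[symmetric] sum.swap[of _ UNIV] sum_divide_distrib[symmetric])
  also have "\<dots> \<le> (1 / real K) * (\<Sum>k<K. sqrt (real CARD('n)) * B0)"
    using B l1_le_sqrt_card order_trans mult_left_mono[OF B, of _ "sqrt (real CARD('n))"]
    by (intro mult_left_mono sum_mono) (auto intro: order_trans[OF l1_le_sqrt_card])
  also have "\<dots> = sqrt (real CARD('n)) * B0" using Kp by simp
  finally show "(\<Sum>j\<in>UNIV. (1 / real K) * (\<Sum>k<K. \<bar>\<delta> k $ j\<bar>)) \<le> sqrt (real CARD('n)) * B0" .
qed

lemma pp_np_abs: "branch_part True x + branch_part False x = \<bar>x\<bar>"
  by (simp add: branch_part_def ppart_def npart_def max_def)

context reed_setup
begin

lemma lam_split: "lam \<delta> j m b = \<eta> * c m * (\<Sum>k<K. branch_part b ((1 / real K) * (\<delta> k $ j))) + \<sigma>z2"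
  by (simp add: lam_def sum_distrib_left)

lemma per_j:
  fixes \<delta> :: "nat \<Rightarrow> real^'d" and j :: 'd
  defines "A \<equiv> (1 / real K) * (\<Sum>k<K. \<bar>\<delta> k $ j\<bar>)"
  shows "(1 / (\<eta> * CC))\<^sup>2 * (\<Sum>m<Mc. (lam \<delta> j m True)\<^sup>2 + (lam \<delta> j m False)\<^sup>2)
     \<le> (\<Sum>m<Mc. (c m)\<^sup>2) / CC\<^sup>2 * A\<^sup>2 + 2 * \<sigma>z2 / (\<eta> * CC) * A + 2 * real Mc * \<sigma>z2\<^sup>2 / (\<eta>\<^sup>2 * CC\<^sup>2)"
proof -
  define Sp where "Sp = (\<Sum>k<K. branch_part True ((1 / real K) * (\<delta> k $ j)))"
  define Sm where "Sm = (\<Sum>k<K. branch_part False ((1 / real K) * (\<delta> k $ j)))"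
  have Sp0: "Sp \<ge> 0" and Sm0: "Sm \<ge> 0" unfolding Sp_def Sm_def by (auto intro!: sum_nonneg bp_nonneg)
  have KA: "Sp + Sm = A"
  proof -
    have "Sp + Sm = (\<Sum>k<K. \<bar>(1 / real K) * (\<delta> k $ j)\<bar>)"
      unfolding Sp_def Sm_def sum.distrib[symmetric] pp_np_abs ..
    also have "\<dots> = A" unfolding A_def by (simp add: abs_mult sum_distrib_left)
    finally show ?thesis .
  qed
  have eC: "\<eta> * CC > 0" using eta C_pos by simp
  have pm: "(lam \<delta> j m True)\<^sup>2 + (lam \<delta> j m False)\<^sup>2 \<le> \<eta>\<^sup>2 * (c m)\<^sup>2 * A\<^sup>2 + 2 * \<eta> * c m * \<sigma>z2 * A + 2 * \<sigma>z2\<^sup>2"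
    if m: "m < Mc" for m
  proof -
    have cm: "c m \<ge> 0" using c_nonneg[OF m] .
    have "(lam \<delta> j m True)\<^sup>2 + (lam \<delta> j m False)\<^sup>2 = \<eta>\<^sup>2 * (c m)\<^sup>2 * (Sp\<^sup>2 + Sm\<^sup>2) + 2 * \<eta> * c m * \<sigma>z2 * (Sp + Sm) + 2 * \<sigma>z2\<^sup>2"
      unfolding lam_split Sp_def[symmetric] Sm_def[symmetric] by (simp add: power2_eq_square algebra_simps)
    also have "\<dots> \<le> \<eta>\<^sup>2 * (c m)\<^sup>2 * (Sp + Sm)\<^sup>2 + 2 * \<eta> * c m * \<sigma>z2 * (Sp + Sm) + 2 * \<sigma>z2\<^sup>2"
    proof -
      have "Sp\<^sup>2 + Sm\<^sup>2 \<le> (Sp + Sm)\<^sup>2" using Sp0 Sm0 by (simp add: power2_eq_square algebra_simps)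
      then show ?thesis by (intro add_right_mono add_mono mult_left_mono) auto
    qed
    finally show ?thesis unfolding KA .
  qed
  have "(\<Sum>m<Mc. (lam \<delta> j m True)\<^sup>2 + (lam \<delta> j m False)\<^sup>2) \<le> (\<Sum>m<Mc. \<eta>\<^sup>2 * (c m)\<^sup>2 * A\<^sup>2 + 2 * \<eta> * c m * \<sigma>z2 * A + 2 * \<sigma>z2\<^sup>2)"
    by (rule sum_mono) (use pm in auto)
  also have "\<dots> = \<eta>\<^sup>2 * A\<^sup>2 * (\<Sum>m<Mc. (c m)\<^sup>2) + 2 * \<eta> * \<sigma>z2 * A * CC + 2 * real Mc * \<sigma>z2\<^sup>2"
    by (simp add: sum.distrib sum_distrib_left sum_distrib_right mult_ac)
  finally have "(1 / (\<eta> * CC))\<^sup>2 * (\<Sum>m<Mc. (lam \<delta> j m True)\<^sup>2 + (lam \<delta> j m False)\<^sup>2)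
     \<le> (1 / (\<eta> * CC))\<^sup>2 * (\<eta>\<^sup>2 * A\<^sup>2 * (\<Sum>m<Mc. (c m)\<^sup>2) + 2 * \<eta> * \<sigma>z2 * A * CC + 2 * real Mc * \<sigma>z2\<^sup>2)"
    by (rule mult_left_mono) simp
  also have "\<dots> = (\<Sum>m<Mc. (c m)\<^sup>2) / CC\<^sup>2 * A\<^sup>2 + 2 * \<sigma>z2 / (\<eta> * CC) * A + 2 * real Mc * \<sigma>z2\<^sup>2 / (\<eta>\<^sup>2 * CC\<^sup>2)"
    using eC eta C_pos by (simp add: power2_eq_square field_simps)
  finally show ?thesis .
qed

lemma Bf_bound:
  fixes \<delta> :: "nat \<Rightarrow> real^'d"
  assumes B: "\<And>k. k < K \<Longrightarrow> norm (\<delta> k) \<le> B0"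
  shows "(\<Sum>j\<in>UNIV. (1 / (\<eta> * CC))\<^sup>2 * (\<Sum>m<Mc. (lam \<delta> j m True)\<^sup>2 + (lam \<delta> j m False)\<^sup>2))
    \<le> (\<Sum>m<Mc. (c m)\<^sup>2) / CC\<^sup>2 * B0\<^sup>2 + 2 * \<sigma>z2 * sqrt (real CARD('d)) / (\<eta> * CC) * B0
       + 2 * real CARD('d) * real Mc * \<sigma>z2\<^sup>2 / (\<eta>\<^sup>2 * CC\<^sup>2)"
proof -
  define A where "A j = (1 / real K) * (\<Sum>k<K. \<bar>\<delta> k $ j\<bar>)" for j
  have eC: "\<eta> * CC > 0" using eta C_pos by simp
  have c1: "(\<Sum>m<Mc. (c m)\<^sup>2) / CC\<^sup>2 \<ge> 0" by (simp add: sum_nonneg)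
  have c2: "2 * \<sigma>z2 / (\<eta> * CC) \<ge> 0" using eC sz by simp
  have "(\<Sum>j\<in>UNIV. (1 / (\<eta> * CC))\<^sup>2 * (\<Sum>m<Mc. (lam \<delta> j m True)\<^sup>2 + (lam \<delta> j m False)\<^sup>2))
     \<le> (\<Sum>j\<in>UNIV. (\<Sum>m<Mc. (c m)\<^sup>2) / CC\<^sup>2 * (A j)\<^sup>2 + 2 * \<sigma>z2 / (\<eta> * CC) * A j + 2 * real Mc * \<sigma>z2\<^sup>2 / (\<eta>\<^sup>2 * CC\<^sup>2))"
    by (rule sum_mono) (unfold A_def, rule per_j)
  also have "\<dots> = (\<Sum>m<Mc. (c m)\<^sup>2) / CC\<^sup>2 * (\<Sum>j\<in>UNIV. (A j)\<^sup>2) + 2 * \<sigma>z2 / (\<eta> * CC) * (\<Sum>j\<in>UNIV. A j)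
      + real CARD('d) * (2 * real Mc * \<sigma>z2\<^sup>2 / (\<eta>\<^sup>2 * CC\<^sup>2))"
    by (simp add: sum.distrib sum_distrib_left)
  also have "\<dots> \<le> (\<Sum>m<Mc. (c m)\<^sup>2) / CC\<^sup>2 * B0\<^sup>2 + 2 * \<sigma>z2 / (\<eta> * CC) * (sqrt (real CARD('d)) * B0)
      + real CARD('d) * (2 * real Mc * \<sigma>z2\<^sup>2 / (\<eta>\<^sup>2 * CC\<^sup>2))"
    using A_bounds[OF K B] unfolding A_def
    by (intro add_mono mult_left_mono c1 c2 order_refl) auto
  also have "\<dots> = (\<Sum>m<Mc. (c m)\<^sup>2) / CC\<^sup>2 * B0\<^sup>2 + 2 * \<sigma>z2 * sqrt (real CARD('d)) / (\<eta> * CC) * B0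
       + 2 * real CARD('d) * real Mc * \<sigma>z2\<^sup>2 / (\<eta>\<^sup>2 * CC\<^sup>2)"
    by (simp add: field_simps)
  finally show ?thesis .
qed

end

lemma mvec[measurable]: "(\<lambda>x::real^'n. x $ j) \<in> borel_measurable borel" by measurable
lemma mbp[measurable]: "branch_part b \<in> borel_measurable borel"
  unfolding branch_part_def[abs_def] ppart_def[abs_def] npart_def[abs_def] by measurable

context reed_setup
begin

interpretation prob_space M by (rule P)

abbreviation "S1 \<equiv> PiM {..<K} (\<lambda>_. borel :: (real^'d) measure)"
abbreviation "TT \<equiv> PiM I (\<lambda>_. borel :: complex measure)"

lemma comp_d: "dv \<in> measurable Z S1 \<Longrightarrow> k < K \<Longrightarrow> (\<lambda>p. dv p k $ j) \<in> borel_measurable Z"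
proof -
  assume dv: "dv \<in> measurable Z S1" and k: "k < K"
  have "(\<lambda>v. v k) \<in> measurable S1 borel" by (rule measurable_component_singleton) (use k in simp)
  from measurable_compose[OF measurable_compose[OF dv this] mvec] show ?thesis .
qed

lemma comp_n: "nv \<in> measurable Z TT \<Longrightarrow> i \<in> I \<Longrightarrow> (\<lambda>p. nv p i) \<in> borel_measurable Z"
proof -
  assume nv: "nv \<in> measurable Z TT" and i: "i \<in> I"
  have "(\<lambda>v. v i) \<in> measurable TT borel" by (rule measurable_component_singleton) (use i in simp)
  from measurable_compose[OF nv this] show ?thesis .
qed

lemma lam_measZ:
  assumes dv: "dv \<in> measurable Z S1"
  shows "(\<lambda>p. lam (dv p) j m b) \<in> borel_measurable Z"
  unfolding lam_def
proof (intro borel_measurable_add borel_measurable_const borel_measurable_sum)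
  fix k assume "k \<in> {..<K}"
  then have [measurable]: "(\<lambda>p. dv p k $ j) \<in> borel_measurable Z" using comp_d[OF dv] by simp
  show "(\<lambda>p. \<eta> * c m * branch_part b (1 / real K * dv p k $ j)) \<in> borel_measurable Z" by measurable
qed

lemma Yn_measZ:
  assumes dv: "dv \<in> measurable Z S1" and nv: "nv \<in> measurable Z TT" and m: "m < Mc"
  shows "(\<lambda>p. Yn \<eta> c \<mu> K (dv p) j m b (nv p)) \<in> borel_measurable Z"
  unfolding Yn_def
proof (intro borel_measurable_add borel_measurable_sum)
  show "(\<lambda>p. nv p (Zidx j m b)) \<in> borel_measurable Z" using comp_n[OF nv Z_in_I[OF m]] .
  fix k assume "k \<in> {..<K}"
  then have k: "k < K" by simp
  have [measurable]: "(\<lambda>p. dv p k $ j) \<in> borel_measurable Z" using comp_d[OF dv k] .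
  have [measurable]: "(\<lambda>p. nv p (Hidx k j m b)) \<in> borel_measurable Z" using comp_n[OF nv H_in_I[OF k m]] .
  have ph: "(\<lambda>p. nv p (Phidx k j m b)) \<in> borel_measurable Z" using comp_n[OF nv Ph_in_I[OF k m]] .
  have [measurable]: "(\<lambda>p. cis (Re (nv p (Phidx k j m b)))) \<in> borel_measurable Z"
    using measurable_compose[OF ph mcisRe] .
  show "(\<lambda>p. nv p (Hidx k j m b) * (complex_of_real (sqrt (\<eta> * c m * branch_part b (1 / real K * dv p k $ j)) / \<mu> k) *
             cis (Re (nv p (Phidx k j m b))))) \<in> borel_measurable Z"
    by measurable
qed

lemma Ej_measZ:
  assumes dv: "dv \<in> measurable Z S1" and nv: "nv \<in> measurable Z TT"
  shows "(\<lambda>p. Ej (dv p) j (nv p)) \<in> borel_measurable Z"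
proof -
  have s1[measurable]: "(\<lambda>p. \<Sum>m<Mc. (cmod (Yn \<eta> c \<mu> K (dv p) j m True (nv p)))\<^sup>2 - (cmod (Yn \<eta> c \<mu> K (dv p) j m False (nv p)))\<^sup>2) \<in> borel_measurable Z"
  proof (rule borel_measurable_sum)
    fix m assume "m \<in> {..<Mc}"
    then have m: "m < Mc" by simp
    have [measurable]: "(\<lambda>p. Yn \<eta> c \<mu> K (dv p) j m True (nv p)) \<in> borel_measurable Z"
       "(\<lambda>p. Yn \<eta> c \<mu> K (dv p) j m False (nv p)) \<in> borel_measurable Z"
      using Yn_measZ[OF dv nv m] by auto
    show "(\<lambda>p. (cmod (Yn \<eta> c \<mu> K (dv p) j m True (nv p)))\<^sup>2 - (cmod (Yn \<eta> c \<mu> K (dv p) j m False (nv p)))\<^sup>2) \<in> borel_measurable Z"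
      by measurable
  qed
  have s2[measurable]: "(\<lambda>p. \<Sum>k<K. dv p k $ j) \<in> borel_measurable Z"
    by (rule borel_measurable_sum) (use comp_d[OF dv] in simp)
  show ?thesis unfolding Ej_def by measurable
qed

lemma Yn_cong_d: "(\<And>k. k < K \<Longrightarrow> \<delta> k = \<delta>' k) \<Longrightarrow> Yn \<eta> c \<mu> K \<delta> j m b n = Yn \<eta> c \<mu> K \<delta>' j m b n"
  unfolding Yn_def by (intro arg_cong2[where f="(+)"] sum.cong) auto
lemma lam_cong_d: "(\<And>k. k < K \<Longrightarrow> \<delta> k = \<delta>' k) \<Longrightarrow> lam \<delta> j m b = lam \<delta>' j m b"
  unfolding lam_def by (intro arg_cong2[where f="(+)"] sum.cong) auto
lemma Ej_cong_d: "(\<And>k. k < K \<Longrightarrow> \<delta> k = \<delta>' k) \<Longrightarrow> Ej \<delta> j n = Ej \<delta>' j n"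
  unfolding Ej_def using Yn_cong_d[of \<delta> \<delta>'] by simp

definition V2 :: "'a \<Rightarrow> nat \<Rightarrow> real^'d" where "V2 \<omega> = restrict (\<lambda>k. \<Delta> k \<omega>) {..<K}"

lemma V2_meas: "V2 \<in> measurable Ccf S1"
  unfolding V2_def[abs_def] by (rule measurable_restrict) (rule Delta_meas_Ccf, simp)

lemma V2_eq: "k < K \<Longrightarrow> V2 \<omega> k = \<Delta> k \<omega>" by (simp add: V2_def)

lemma rx_Yn0: "m < Mc \<Longrightarrow> reed_rx \<eta> c \<mu> K \<Delta> h z \<phi> j m b \<omega> = Yn \<eta> c \<mu> K (\<lambda>k. \<Delta> k \<omega>) j m b (Nv \<omega>)"
  using Yn_Nv[of m "\<lambda>k. \<Delta> k \<omega>" j b \<omega>]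
  by (simp add: reed_rx_def reed_tx_def)

lemma rx_Yn: "m < Mc \<Longrightarrow> reed_rx \<eta> c \<mu> K \<Delta> h z \<phi> j m b \<omega> = Yn \<eta> c \<mu> K (V2 \<omega>) j m b (Nv \<omega>)"
  unfolding rx_Yn0 by (rule Yn_cong_d) (simp add: V2_eq)

lemma eps_j: "(reed_est \<eta> Mc c \<mu> K \<Delta> h z \<phi> \<omega> - ideal_agg K \<Delta> \<omega>) $ j = Ej (V2 \<omega>) j (Nv \<omega>)"
proof -
  have "Ej (V2 \<omega>) j (Nv \<omega>) = Ej (\<lambda>k. \<Delta> k \<omega>) j (Nv \<omega>)" by (rule Ej_cong_d) (simp add: V2_eq)
  moreover have "(\<Sum>m<Mc. (cmod (reed_rx \<eta> c \<mu> K \<Delta> h z \<phi> j m True \<omega>))\<^sup>2 - (cmod (reed_rx \<eta> c \<mu> K \<Delta> h z \<phi> j m False \<omega>))\<^sup>2)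
     = (\<Sum>m<Mc. (cmod (Yn \<eta> c \<mu> K (\<lambda>k. \<Delta> k \<omega>) j m True (Nv \<omega>)))\<^sup>2 - (cmod (Yn \<eta> c \<mu> K (\<lambda>k. \<Delta> k \<omega>) j m False (Nv \<omega>)))\<^sup>2)"
    by (rule sum.cong) (auto simp: rx_Yn0)
  ultimately show ?thesis
    unfolding reed_est_def ideal_agg_def
    by (simp add: Ej_def sum_component)
qed

lemma Delta_bound:
  assumes beta: "\<beta> > 0" and g: "\<forall>q<Q. norm (g k q \<omega>) \<le> G"
  shows "norm (\<Delta> k \<omega>) \<le> \<beta> * real Q * G"
proof -
  have "norm (\<Delta> k \<omega>) = \<beta> * norm (\<Sum>q<Q. g k q \<omega>)"
    using beta by (simp add: local_incr_def)
  also have "\<dots> \<le> \<beta> * (\<Sum>q<Q. norm (g k q \<omega>))"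
    using beta by (intro mult_left_mono norm_sum) auto
  also have "\<dots> \<le> \<beta> * (\<Sum>q<Q. G)"
    using beta g by (intro mult_left_mono sum_mono) auto
  finally show ?thesis by simp
qed

lemma part2:
  assumes beta: "\<beta> > 0" and AEg: "\<forall>k<K. \<forall>q<Q. AE \<omega> in M. norm (g k q \<omega>) \<le> G"
  shows "(\<integral>\<^sup>+\<omega>. ennreal ((norm (reed_est \<eta> Mc c \<mu> K \<Delta> h z \<phi> \<omega> - ideal_agg K \<Delta> \<omega>))\<^sup>2) \<partial>M)
     \<le> ennreal ((\<Sum>m<Mc. (c m)\<^sup>2) / CC\<^sup>2 * (\<beta> * real Q * G)\<^sup>2 + 2 * \<sigma>z2 * sqrt (real CARD('d)) / (\<eta> * CC) * (\<beta> * real Q * G)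
       + 2 * real CARD('d) * real Mc * \<sigma>z2\<^sup>2 / (\<eta>\<^sup>2 * CC\<^sup>2))"
    (is "_ \<le> ennreal ?B")
proof -
  define Bf where "Bf v = (\<Sum>j\<in>UNIV. (1 / (\<eta> * CC))\<^sup>2 * (\<Sum>m<Mc. (lam v j m True)\<^sup>2 + (lam v j m False)\<^sup>2))" for v
  define F where "F p = ennreal (\<Sum>j\<in>UNIV. (Ej (fst p) j (snd p))\<^sup>2)" for p :: "(nat \<Rightarrow> real^'d) \<times> ('d noise_idx \<Rightarrow> complex)"
  have e1: "(norm (reed_est \<eta> Mc c \<mu> K \<Delta> h z \<phi> \<omega> - ideal_agg K \<Delta> \<omega>))\<^sup>2 = (\<Sum>j\<in>UNIV. (Ej (V2 \<omega>) j (Nv \<omega>))\<^sup>2)" for \<omega>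
    unfolding normsq_vec eps_j by simp
  have Fm: "F \<in> borel_measurable (S1 \<Otimes>\<^sub>M TT)"
  proof -
    have "(\<lambda>p. \<Sum>j\<in>UNIV. (Ej (fst p) j (snd p))\<^sup>2) \<in> borel_measurable (S1 \<Otimes>\<^sub>M TT)"
    proof (rule borel_measurable_sum)
      fix j :: 'd
      have [measurable]: "(\<lambda>p. Ej (fst p) j (snd p)) \<in> borel_measurable (S1 \<Otimes>\<^sub>M TT)"
        by (rule Ej_measZ[OF measurable_fst measurable_snd])
      show "(\<lambda>p. (Ej (fst p) j (snd p))\<^sup>2) \<in> borel_measurable (S1 \<Otimes>\<^sub>M TT)" by measurable
    qed
    then show ?thesis unfolding F_def by measurable
  qed
  have V2M: "V2 \<in> measurable M S1" by (rule measurable_from_subalg[OF sub_Ccf V2_meas])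
  have Bfm: "(\<lambda>v. ennreal (Bf v)) \<in> borel_measurable S1"
  proof -
    have "Bf \<in> borel_measurable S1"
      unfolding Bf_def[abs_def]
      by (intro borel_measurable_sum borel_measurable_times borel_measurable_const borel_measurable_add borel_measurable_power
          lam_measZ[OF measurable_ident_sets[OF refl]])
    then show ?thesis by measurable
  qed
  have "(\<integral>\<^sup>+\<omega>. ennreal ((norm (reed_est \<eta> Mc c \<mu> K \<Delta> h z \<phi> \<omega> - ideal_agg K \<Delta> \<omega>))\<^sup>2) \<partial>M)
      = (\<integral>\<^sup>+\<omega>. F (V2 \<omega>, Nv \<omega>) \<partial>M)"
    by (simp add: e1 F_def)
  also have "\<dots> = (\<integral>\<^sup>+v. (\<integral>\<^sup>+\<omega>. F (v, Nv \<omega>) \<partial>M) \<partial>distr M S1 V2)"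
    by (rule outer[OF V2_meas Fm])
  also have "\<dots> = (\<integral>\<^sup>+v. ennreal (Bf v) \<partial>distr M S1 V2)"
  proof (rule nn_integral_cong)
    fix v
    have int: "integrable M (\<lambda>\<omega>. \<Sum>j\<in>UNIV. (Ej v j (Nv \<omega>))\<^sup>2)"
      by (rule Bochner_Integration.integrable_sum, rule Ej_sq(1))
    have "(\<integral>\<^sup>+\<omega>. F (v, Nv \<omega>) \<partial>M) = ennreal (\<integral>\<omega>. (\<Sum>j\<in>UNIV. (Ej v j (Nv \<omega>))\<^sup>2) \<partial>M)"
      unfolding F_def by (simp add: nn_integral_eq_integral[OF int] sum_nonneg)
    also have "(\<integral>\<omega>. (\<Sum>j\<in>UNIV. (Ej v j (Nv \<omega>))\<^sup>2) \<partial>M) = Bf v"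
      unfolding Bf_def by (simp add: Bochner_Integration.integral_sum Ej_sq)
    finally show "(\<integral>\<^sup>+\<omega>. F (v, Nv \<omega>) \<partial>M) = ennreal (Bf v)" .
  qed
  also have "\<dots> = (\<integral>\<^sup>+\<omega>. ennreal (Bf (V2 \<omega>)) \<partial>M)"
    using Bfm by (intro nn_integral_distr[OF V2M]) simp
  also have "\<dots> \<le> (\<integral>\<^sup>+\<omega>. ennreal ?B \<partial>M)"
  proof (rule nn_integral_mono_AE)
    have "AE \<omega> in M. \<forall>k\<in>{..<K}. \<forall>q\<in>{..<Q}. norm (g k q \<omega>) \<le> G"
      using AEg by (simp add: AE_finite_all)
    then show "AE \<omega> in M. ennreal (Bf (V2 \<omega>)) \<le> ennreal ?B"
    proof (rule AE_mp, intro AE_I2 impI)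
      fix \<omega> assume "\<forall>k\<in>{..<K}. \<forall>q\<in>{..<Q}. norm (g k q \<omega>) \<le> G"
      then have "\<And>k. k < K \<Longrightarrow> norm (V2 \<omega> k) \<le> \<beta> * real Q * G"
        using Delta_bound[OF beta] by (simp add: V2_eq)
      from Bf_bound[OF this] show "ennreal (Bf (V2 \<omega>)) \<le> ennreal ?B"
        unfolding Bf_def by (rule ennreal_leI)
    qed
  qed
  also have "\<dots> = ennreal ?B" by (simp add: emeasure_space_1)
  finally show ?thesis .
qed

end

context reed_setup
begin

interpretation prob_space M by (rule P)

lemma Delta_int: "k < K \<Longrightarrow> integrable M (\<lambda>\<omega>. \<Delta> k \<omega> $ j)"
proof -
  assume k: "k < K"
  have "integrable M (\<Delta> k)"
    unfolding local_incr_def[abs_def] using g_int k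
    by (intro integrable_scaleR_right Bochner_Integration.integrable_sum) auto
  then show ?thesis by (rule integrable_bounded_linear[OF bounded_linear_vec_nth])
qed

lemma bp_abs: "\<bar>branch_part b x\<bar> \<le> \<bar>x\<bar>"
  by (auto simp: branch_part_def ppart_def npart_def)

lemma lam_int: "integrable M (\<lambda>\<omega>. lam (V2 \<omega>) j m b)"
proof -
  have "integrable M (\<lambda>\<omega>. branch_part b ((1 / real K) * (V2 \<omega> k $ j)))" if k: "k < K" for k
  proof -
    have i: "integrable M (\<lambda>\<omega>. (1 / real K) * (\<Delta> k \<omega> $ j))" using Delta_int[OF k] by simp
    have dm: "(\<lambda>\<omega>. \<Delta> k \<omega> $ j) \<in> borel_measurable M" using Delta_meas[OF k] by measurable
    show ?thesis
    proof (rule Bochner_Integration.integrable_bound[OF i])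
      show "(\<lambda>\<omega>. branch_part b ((1 / real K) * (V2 \<omega> k $ j))) \<in> borel_measurable M"
        using dm by (simp add: V2_eq k)
      show "AE x in M. norm (branch_part b ((1 / real K) * (V2 x k $ j))) \<le> norm ((1 / real K) * (\<Delta> k x $ j))"
      proof (intro AE_I2)
        fix x show "norm (branch_part b ((1 / real K) * (V2 x k $ j))) \<le> norm ((1 / real K) * (\<Delta> k x $ j))"
          using bp_abs[of b "(1 / real K) * (\<Delta> k x $ j)"] by (simp add: V2_eq k)
      qed
    qed
  qed
  then show ?thesis unfolding lam_def
    by (intro Bochner_Integration.integrable_add Bochner_Integration.integrable_sum integrable_mult_right) auto
qed

lemma lam_nonneg: "lam \<delta> j m b \<ge> 0" if "m < Mc"
  unfolding lam_def using eta c_nonneg[OF that] sz bp_nonneg by (intro add_nonneg_nonneg sum_nonneg) auto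

lemma part1_int:
  assumes A: "A \<in> sets Ccf"
  shows "integrable M (\<lambda>\<omega>. indicator A \<omega> * (\<Sum>m<Mc. (cmod (Yn \<eta> c \<mu> K (V2 \<omega>) j m b (Nv \<omega>)))\<^sup>2))"
    "(\<integral>\<omega>. indicator A \<omega> * (\<Sum>m<Mc. (cmod (Yn \<eta> c \<mu> K (V2 \<omega>) j m b (Nv \<omega>)))\<^sup>2) \<partial>M)
      = (\<integral>\<omega>. indicator A \<omega> * (\<Sum>m<Mc. lam (V2 \<omega>) j m b) \<partial>M)"
proof -
  let ?S = "(borel :: real measure) \<Otimes>\<^sub>M S1"
  define f1 where "f1 \<omega> = indicator A \<omega> * (\<Sum>m<Mc. (cmod (Yn \<eta> c \<mu> K (V2 \<omega>) j m b (Nv \<omega>)))\<^sup>2)" for \<omega>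
  define f2 where "f2 \<omega> = indicator A \<omega> * (\<Sum>m<Mc. lam (V2 \<omega>) j m b)" for \<omega>
  define F where "F p = ennreal (fst (fst p) * (\<Sum>m<Mc. (cmod (Yn \<eta> c \<mu> K (snd (fst p)) j m b (snd p)))\<^sup>2))"
    for p :: "(real \<times> (nat \<Rightarrow> real^'d)) \<times> ('d noise_idx \<Rightarrow> complex)"
  define G where "G p = ennreal (fst p * (\<Sum>m<Mc. lam (snd p) j m b))" for p :: "real \<times> (nat \<Rightarrow> real^'d)"
  have AM: "A \<in> sets M" using A sub_Ccf by (auto simp: subalgebra_def)
  have Vp: "(\<lambda>\<omega>. (indicator A \<omega>, V2 \<omega>)) \<in> measurable Ccf ?S"
    using A by (intro measurable_Pair V2_meas borel_measurable_indicator)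
  have VpM: "(\<lambda>\<omega>. (indicator A \<omega>, V2 \<omega>)) \<in> measurable M ?S"
    by (rule measurable_from_subalg[OF sub_Ccf Vp])
  have sf: "(\<lambda>p. snd (fst p)) \<in> measurable (?S \<Otimes>\<^sub>M TT) S1"
    by (rule measurable_compose[OF measurable_fst measurable_snd])
  have Fm: "F \<in> borel_measurable (?S \<Otimes>\<^sub>M TT)"
  proof -
    have "(\<lambda>p. \<Sum>m<Mc. (cmod (Yn \<eta> c \<mu> K (snd (fst p)) j m b (snd p)))\<^sup>2) \<in> borel_measurable (?S \<Otimes>\<^sub>M TT)"
    proof (rule borel_measurable_sum)
      fix m assume "m \<in> {..<Mc}"
      then have [measurable]: "(\<lambda>p. Yn \<eta> c \<mu> K (snd (fst p)) j m b (snd p)) \<in> borel_measurable (?S \<Otimes>\<^sub>M TT)"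
        using Yn_measZ[OF sf measurable_snd] by simp
      show "(\<lambda>p. (cmod (Yn \<eta> c \<mu> K (snd (fst p)) j m b (snd p)))\<^sup>2) \<in> borel_measurable (?S \<Otimes>\<^sub>M TT)" by measurable
    qed
    then show ?thesis unfolding F_def by measurable
  qed
  have Gm: "G \<in> borel_measurable ?S"
  proof -
    have "(\<lambda>p. \<Sum>m<Mc. lam (snd p) j m b) \<in> borel_measurable ?S"
      by (intro borel_measurable_sum lam_measZ[OF measurable_snd])
    then show ?thesis unfolding G_def by measurable
  qed
  have inner: "(\<integral>\<^sup>+\<omega>. F (p, Nv \<omega>) \<partial>M) = G p" for p
  proof (cases "fst p \<ge> 0")
    case True
    have ii: "integrable M (\<lambda>\<omega>. (cmod (Yn \<eta> c \<mu> K (snd p) j m b (Nv \<omega>)))\<^sup>2)" if "m \<in> {..<Mc}" for m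
      using good_moments(1)[OF P inner_good] that by simp
    have iv: "(\<integral>\<omega>. (cmod (Yn \<eta> c \<mu> K (snd p) j m b (Nv \<omega>)))\<^sup>2 \<partial>M) = lam (snd p) j m b" if "m \<in> {..<Mc}" for m
      using good_moments(2)[OF P inner_good] that by simp
    have int: "integrable M (\<lambda>\<omega>. fst p * (\<Sum>m<Mc. (cmod (Yn \<eta> c \<mu> K (snd p) j m b (Nv \<omega>)))\<^sup>2))"
      using ii by (intro integrable_mult_right Bochner_Integration.integrable_sum) auto
    have "(\<integral>\<^sup>+\<omega>. F (p, Nv \<omega>) \<partial>M) = ennreal (\<integral>\<omega>. fst p * (\<Sum>m<Mc. (cmod (Yn \<eta> c \<mu> K (snd p) j m b (Nv \<omega>)))\<^sup>2) \<partial>M)"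
      unfolding F_def using True by (simp add: nn_integral_eq_integral[OF int] sum_nonneg)
    also have "(\<integral>\<omega>. fst p * (\<Sum>m<Mc. (cmod (Yn \<eta> c \<mu> K (snd p) j m b (Nv \<omega>)))\<^sup>2) \<partial>M) = fst p * (\<Sum>m<Mc. lam (snd p) j m b)"
      using ii iv by (simp add: Bochner_Integration.integral_sum)
    finally show ?thesis by (simp add: G_def)
  next
    case False
    then have "F (p, Nv \<omega>) = 0" for \<omega>
      unfolding F_def by (intro ennreal_eq_0_iff[THEN iffD2] mult_nonpos_nonneg sum_nonneg) auto
    moreover have "G p = 0"
      unfolding G_def using False lam_nonneg by (intro ennreal_eq_0_iff[THEN iffD2] mult_nonpos_nonneg sum_nonneg) auto
    ultimately show ?thesis by simp
  qed
  have i2: "integrable M f2"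
    unfolding f2_def using lam_int AM
    by (subst mult.commute, intro integrable_real_mult_indicator Bochner_Integration.integrable_sum) auto
  have f2n: "f2 \<omega> \<ge> 0" for \<omega>
    unfolding f2_def by (auto intro!: mult_nonneg_nonneg sum_nonneg lam_nonneg)
  have f1n: "f1 \<omega> \<ge> 0" for \<omega>
    unfolding f1_def by (auto intro!: mult_nonneg_nonneg sum_nonneg)
  have NN: "(\<integral>\<^sup>+\<omega>. ennreal (f1 \<omega>) \<partial>M) = (\<integral>\<^sup>+\<omega>. ennreal (f2 \<omega>) \<partial>M)"
  proof -
    have "(\<integral>\<^sup>+\<omega>. ennreal (f1 \<omega>) \<partial>M) = (\<integral>\<^sup>+\<omega>. F ((indicator A \<omega>, V2 \<omega>), Nv \<omega>) \<partial>M)"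
      by (simp add: f1_def F_def)
    also have "\<dots> = (\<integral>\<^sup>+p. (\<integral>\<^sup>+\<omega>. F (p, Nv \<omega>) \<partial>M) \<partial>distr M ?S (\<lambda>\<omega>. (indicator A \<omega>, V2 \<omega>)))"
      by (rule outer[OF Vp Fm])
    also have "\<dots> = (\<integral>\<^sup>+p. G p \<partial>distr M ?S (\<lambda>\<omega>. (indicator A \<omega>, V2 \<omega>)))"
      by (simp add: inner)
    also have "\<dots> = (\<integral>\<^sup>+\<omega>. G (indicator A \<omega>, V2 \<omega>) \<partial>M)"
      using Gm by (intro nn_integral_distr[OF VpM]) simp
    also have "\<dots> = (\<integral>\<^sup>+\<omega>. ennreal (f2 \<omega>) \<partial>M)"
      by (simp add: f2_def G_def)
    finally show ?thesis .
  qed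
  have f1m: "f1 \<in> borel_measurable M"
  proof -
    have Fc: "(\<lambda>\<omega>. F ((indicator A \<omega>, V2 \<omega>), Nv \<omega>)) \<in> borel_measurable M"
      using measurable_compose[OF measurable_Pair[OF VpM Nv_meas] Fm] .
    have "(\<lambda>\<omega>. enn2real (F ((indicator A \<omega>, V2 \<omega>), Nv \<omega>))) \<in> borel_measurable M"
      using Fc by measurable
    moreover have "enn2real (F ((indicator A \<omega>, V2 \<omega>), Nv \<omega>)) = f1 \<omega>" for \<omega>
      using f1n[of \<omega>] by (simp add: F_def f1_def)
    ultimately show ?thesis by simp
  qed
  have fin2: "(\<integral>\<^sup>+\<omega>. ennreal (f2 \<omega>) \<partial>M) = ennreal (\<integral>\<omega>. f2 \<omega> \<partial>M)"
    using i2 f2n by (simp add: nn_integral_eq_integral)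
  have i1: "integrable M f1"
    by (rule integrableI_nonneg[OF f1m]) (use f1n NN fin2 in auto)
  have "ennreal (\<integral>\<omega>. f1 \<omega> \<partial>M) = ennreal (\<integral>\<omega>. f2 \<omega> \<partial>M)"
    using NN fin2 i1 f1n by (simp add: nn_integral_eq_integral)
  then have "(\<integral>\<omega>. f1 \<omega> \<partial>M) = (\<integral>\<omega>. f2 \<omega> \<partial>M)"
    using f1n f2n by (simp add: integral_nonneg_AE ennreal_inj)
  then show "integrable M (\<lambda>\<omega>. indicator A \<omega> * (\<Sum>m<Mc. (cmod (Yn \<eta> c \<mu> K (V2 \<omega>) j m b (Nv \<omega>)))\<^sup>2))"
    "(\<integral>\<omega>. indicator A \<omega> * (\<Sum>m<Mc. (cmod (Yn \<eta> c \<mu> K (V2 \<omega>) j m b (Nv \<omega>)))\<^sup>2) \<partial>M)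
      = (\<integral>\<omega>. indicator A \<omega> * (\<Sum>m<Mc. lam (V2 \<omega>) j m b) \<partial>M)"
    using i1 by (simp_all add: f1_def[abs_def] f2_def[abs_def])
qed

lemma eps_decomp:
  "(reed_est \<eta> Mc c \<mu> K \<Delta> h z \<phi> \<omega> - ideal_agg K \<Delta> \<omega>) $ j =
     (1 / (\<eta> * CC)) * ((\<Sum>m<Mc. (cmod (Yn \<eta> c \<mu> K (V2 \<omega>) j m True (Nv \<omega>)))\<^sup>2)
        - (\<Sum>m<Mc. (cmod (Yn \<eta> c \<mu> K (V2 \<omega>) j m False (Nv \<omega>)))\<^sup>2))
     - (1 / real K) * (\<Sum>k<K. V2 \<omega> k $ j)"
  unfolding eps_j Ej_def by (simp add: sum_subtractf)

lemma D_int: "integrable M (\<lambda>\<omega>. (1 / real K) * (\<Sum>k<K. V2 \<omega> k $ j))"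
  using Delta_int by (intro integrable_mult_right Bochner_Integration.integrable_sum) (auto simp: V2_eq)

lemma part1:
  assumes A: "A \<in> sets Ccf"
  shows "(\<integral>\<omega>. indicator A \<omega> * ((reed_est \<eta> Mc c \<mu> K \<Delta> h z \<phi> \<omega> - ideal_agg K \<Delta> \<omega>) $ j) \<partial>M) = 0"
proof -
  define T where "T b \<omega> = (\<Sum>m<Mc. (cmod (Yn \<eta> c \<mu> K (V2 \<omega>) j m b (Nv \<omega>)))\<^sup>2)" for b \<omega>
  define L where "L b \<omega> = (\<Sum>m<Mc. lam (V2 \<omega>) j m b)" for b \<omega>
  define D where "D \<omega> = (1 / real K) * (\<Sum>k<K. V2 \<omega> k $ j)" for \<omega>
  have AM: "A \<in> sets M" using A sub_Ccf by (auto simp: subalgebra_def)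
  have iT: "integrable M (\<lambda>\<omega>. indicator A \<omega> * T b \<omega>)" for b
    unfolding T_def by (rule part1_int(1)[OF A])
  have vT: "(\<integral>\<omega>. indicator A \<omega> * T b \<omega> \<partial>M) = (\<integral>\<omega>. indicator A \<omega> * L b \<omega> \<partial>M)" for b
    unfolding T_def L_def by (rule part1_int(2)[OF A])
  have iL: "integrable M (\<lambda>\<omega>. indicator A \<omega> * L b \<omega>)" for b
    unfolding L_def using lam_int AM
    by (subst mult.commute, intro integrable_real_mult_indicator Bochner_Integration.integrable_sum) auto
  have iD: "integrable M (\<lambda>\<omega>. indicator A \<omega> * D \<omega>)"
    unfolding D_def using D_int AM by (subst mult.commute, intro integrable_real_mult_indicator) auto
  have etaC: "\<eta> * CC \<noteq> 0" using eta C_pos by simp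
  have pw: "(1 / (\<eta> * CC)) * (indicator A \<omega> * L True \<omega> - indicator A \<omega> * L False \<omega>) - indicator A \<omega> * D \<omega> = 0" for \<omega>
  proof -
    have "L True \<omega> - L False \<omega> = \<eta> * CC * D \<omega>"
      unfolding L_def D_def by (simp add: sum_subtractf[symmetric] lam_diff)
    then show ?thesis using etaC by (simp add: right_diff_distrib[symmetric] field_simps)
  qed
  have "(\<integral>\<omega>. indicator A \<omega> * ((reed_est \<eta> Mc c \<mu> K \<Delta> h z \<phi> \<omega> - ideal_agg K \<Delta> \<omega>) $ j) \<partial>M)
     = (\<integral>\<omega>. (1 / (\<eta> * CC)) * (indicator A \<omega> * T True \<omega> - indicator A \<omega> * T False \<omega>) - indicator A \<omega> * D \<omega> \<partial>M)"
    unfolding eps_decomp T_def D_def by (simp add: algebra_simps)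
  also have "\<dots> = (1 / (\<eta> * CC)) * ((\<integral>\<omega>. indicator A \<omega> * T True \<omega> \<partial>M) - (\<integral>\<omega>. indicator A \<omega> * T False \<omega> \<partial>M))
      - (\<integral>\<omega>. indicator A \<omega> * D \<omega> \<partial>M)"
    using iT iD by simp
  also have "\<dots> = (1 / (\<eta> * CC)) * ((\<integral>\<omega>. indicator A \<omega> * L True \<omega> \<partial>M) - (\<integral>\<omega>. indicator A \<omega> * L False \<omega> \<partial>M))
      - (\<integral>\<omega>. indicator A \<omega> * D \<omega> \<partial>M)"
    by (simp only: vT)
  also have "\<dots> = (\<integral>\<omega>. (1 / (\<eta> * CC)) * (indicator A \<omega> * L True \<omega> - indicator A \<omega> * L False \<omega>) - indicator A \<omega> * D \<omega> \<partial>M)"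
    using iL iD by simp
  also have "\<dots> = 0" by (simp only: pw) simp
  finally show ?thesis .
qed

lemma eps_int: "integrable M (\<lambda>\<omega>. (reed_est \<eta> Mc c \<mu> K \<Delta> h z \<phi> \<omega> - ideal_agg K \<Delta> \<omega>) $ j)"
proof -
  have sM: "space M \<in> sets Ccf" using sets.top[of Ccf] by (simp add: space_Ccf)
  have i: "integrable M (\<lambda>\<omega>. indicator (space M) \<omega> * (\<Sum>m<Mc. (cmod (Yn \<eta> c \<mu> K (V2 \<omega>) j m b (Nv \<omega>)))\<^sup>2))" for b
    by (rule part1_int(1)[OF sM])
  have i': "integrable M (\<lambda>\<omega>. (\<Sum>m<Mc. (cmod (Yn \<eta> c \<mu> K (V2 \<omega>) j m b (Nv \<omega>)))\<^sup>2))" for b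
  proof -
    have "integrable M (\<lambda>\<omega>. indicator (space M) \<omega> * (\<Sum>m<Mc. (cmod (Yn \<eta> c \<mu> K (V2 \<omega>) j m b (Nv \<omega>)))\<^sup>2))
      = integrable M (\<lambda>\<omega>. (\<Sum>m<Mc. (cmod (Yn \<eta> c \<mu> K (V2 \<omega>) j m b (Nv \<omega>)))\<^sup>2))"
      by (rule Bochner_Integration.integrable_cong) auto
    then show ?thesis using i[of b] by simp
  qed
  show ?thesis
    unfolding eps_decomp
    by (rule Bochner_Integration.integrable_diff[OF integrable_mult_right[OF Bochner_Integration.integrable_diff[OF i'[of True] i'[of False]]] D_int])
qed

end

theorem lemma1:
  fixes M :: "'a measure" and Ft :: "'a measure"
    and K Q Mc :: nat and \<beta> \<eta> \<sigma>z2 G :: real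
    and \<mu> c :: "nat \<Rightarrow> real"
    and g :: "nat \<Rightarrow> nat \<Rightarrow> 'a \<Rightarrow> real^'d"
    and h :: "nat \<Rightarrow> 'd \<Rightarrow> nat \<Rightarrow> bool \<Rightarrow> 'a \<Rightarrow> complex"
    and z :: "'d \<Rightarrow> nat \<Rightarrow> bool \<Rightarrow> 'a \<Rightarrow> complex"
    and \<phi> :: "nat \<Rightarrow> 'd \<Rightarrow> nat \<Rightarrow> bool \<Rightarrow> 'a \<Rightarrow> real"
  defines "\<Delta> \<equiv> local_incr \<beta> Q g"
  defines "\<epsilon> \<equiv> (\<lambda>\<omega>. reed_est \<eta> Mc c \<mu> K \<Delta> h z \<phi> \<omega> - ideal_agg K \<Delta> \<omega>)"
  defines "C \<equiv> (\<Sum>m<Mc. c m)"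
  defines "d \<equiv> real CARD('d)"
  assumes P: "prob_space M"
    and Ft: "subalgebra M Ft"
    and K: "K \<ge> 1"
    and beta: "\<beta> > 0"
    and eta: "\<eta> > 0"
    and sz: "\<sigma>z2 > 0"
    and mu: "\<And>k. k < K \<Longrightarrow> \<mu> k > 0"
    and Mc: "Mc \<ge> 1"
    and c_nonneg: "\<And>m. m < Mc \<Longrightarrow> c m \<ge> 0"
    and C_pos: "C > 0"
    and g_meas: "\<And>k q. k < K \<Longrightarrow> q < Q \<Longrightarrow> g k q \<in> borel_measurable M"
    and g_int: "\<And>k q. k < K \<Longrightarrow> q < Q \<Longrightarrow> integrable M (g k q)"
    and h_dist: "\<And>k j m b. k < K \<Longrightarrow> m < Mc \<Longrightarrow> is_CN M ((\<mu> k)\<^sup>2) (h k j m b)"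
    and z_dist: "\<And>j m b. m < Mc \<Longrightarrow> is_CN M \<sigma>z2 (z j m b)"
    and phi_dist: "\<And>k j m b. k < K \<Longrightarrow> m < Mc \<Longrightarrow> is_unif_phase M (\<phi> k j m b)"
    and indep: "prob_space.indep_sets M
                  (\<lambda>i. case i of
                         None \<Rightarrow> sets (cond_field M Ft K \<Delta>)
                       | Some n \<Rightarrow> {noise_family h z \<phi> n -` A \<inter> space M | A. A \<in> sets borel})
                  (insert None (Some ` noise_idx_set K Mc))"
  shows "(\<forall>j. integrable M (\<lambda>\<omega>. \<epsilon> \<omega> $ j)
              \<and> (AE \<omega> in M. real_cond_exp M (cond_field M Ft K \<Delta>) (\<lambda>\<omega>. \<epsilon> \<omega> $ j) \<omega> = 0)
              \<and> (AE \<omega> in M. real_cond_exp M Ft (\<lambda>\<omega>. \<epsilon> \<omega> $ j) \<omega> = 0))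
       \<and> ((\<forall>k<K. \<forall>q<Q. AE \<omega> in M. norm (g k q \<omega>) \<le> G) \<longrightarrow>
            (\<integral>\<^sup>+ \<omega>. ennreal ((norm (\<epsilon> \<omega>))\<^sup>2) \<partial>M)
              \<le> ennreal ((\<Sum>m<Mc. (c m)\<^sup>2) / C\<^sup>2 * (\<beta> * real Q * G)\<^sup>2
                         + 2 * \<sigma>z2 * sqrt d / (\<eta> * C) * (\<beta> * real Q * G)
                         + 2 * d * real Mc * \<sigma>z2\<^sup>2 / (\<eta>\<^sup>2 * C\<^sup>2)))"
proof -
  note defs = \<Delta>_def \<epsilon>_def C_def d_def
  interpret prob_space M by (rule P)
  interpret R: reed_setup M Ft K Q Mc \<beta> \<eta> \<sigma>z2 \<mu> c g h z \<phi>
  proof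
    show "(\<Sum>m<Mc. c m) > 0" using C_pos by (simp add: C_def)
    show "prob_space.indep_sets M
                  (\<lambda>i. case i of
                         None \<Rightarrow> sets (cond_field M Ft K (local_incr \<beta> Q g))
                       | Some n \<Rightarrow> {noise_family h z \<phi> n -` A \<inter> space M | A. A \<in> sets borel})
                  (insert None (Some ` noise_idx_set K Mc))"
      using indep unfolding \<Delta>_def .
  qed (use P Ft K eta sz mu Mc c_nonneg g_meas g_int h_dist z_dist phi_dist in auto)
  have eps_eq: "\<epsilon> \<omega> = reed_est \<eta> Mc c \<mu> K (local_incr \<beta> Q g) h z \<phi> \<omega> - ideal_agg K (local_incr \<beta> Q g) \<omega>" for \<omega>
    by (simp add: \<epsilon>_def \<Delta>_def)
  have CF: "cond_field M Ft K \<Delta> = cond_field M Ft K (local_incr \<beta> Q g)" by (simp add: \<Delta>_def)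
  have sfC: "sigma_finite_subalgebra M (cond_field M Ft K (local_incr \<beta> Q g))"
    by (rule finite_measure_subalgebra_is_sigma_finite, unfold_locales, rule R.sub_Ccf)
  have sfF: "sigma_finite_subalgebra M Ft"
    by (rule finite_measure_subalgebra_is_sigma_finite, unfold_locales, rule Ft)
  have part1: "integrable M (\<lambda>\<omega>. \<epsilon> \<omega> $ j)
              \<and> (AE \<omega> in M. real_cond_exp M (cond_field M Ft K \<Delta>) (\<lambda>\<omega>. \<epsilon> \<omega> $ j) \<omega> = 0)
              \<and> (AE \<omega> in M. real_cond_exp M Ft (\<lambda>\<omega>. \<epsilon> \<omega> $ j) \<omega> = 0)" for j
  proof -
    have int: "integrable M (\<lambda>\<omega>. \<epsilon> \<omega> $ j)" unfolding eps_eq by (rule R.eps_int)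
    have z: "(\<integral>x\<in>A. \<epsilon> x $ j \<partial>M) = (\<integral>x\<in>A. 0 \<partial>M)" if "A \<in> sets (cond_field M Ft K (local_incr \<beta> Q g))" for A
      using R.part1[OF that, of j] by (simp add: set_lebesgue_integral_def eps_eq)
    have c1: "AE \<omega> in M. real_cond_exp M (cond_field M Ft K (local_incr \<beta> Q g)) (\<lambda>\<omega>. \<epsilon> \<omega> $ j) \<omega> = 0"
      by (rule sigma_finite_subalgebra.real_cond_exp_charact[OF sfC z int]) auto
    have c2: "AE \<omega> in M. real_cond_exp M Ft (\<lambda>\<omega>. \<epsilon> \<omega> $ j) \<omega> = 0"
      by (rule sigma_finite_subalgebra.real_cond_exp_charact[OF sfF z int])
         (use R.Ft_sub_Ccf in auto)
    show ?thesis using int c1 c2 CF by simp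
  qed
  have part2: "(\<integral>\<^sup>+ \<omega>. ennreal ((norm (\<epsilon> \<omega>))\<^sup>2) \<partial>M)
              \<le> ennreal ((\<Sum>m<Mc. (c m)\<^sup>2) / C\<^sup>2 * (\<beta> * real Q * G)\<^sup>2
                         + 2 * \<sigma>z2 * sqrt d / (\<eta> * C) * (\<beta> * real Q * G)
                         + 2 * d * real Mc * \<sigma>z2\<^sup>2 / (\<eta>\<^sup>2 * C\<^sup>2))"
    if AEg: "\<forall>k<K. \<forall>q<Q. AE \<omega> in M. norm (g k q \<omega>) \<le> G"
    using R.part2[OF beta AEg] by (simp add: eps_eq C_def d_def)
  show ?thesis using part1 part2 by blast
qed

end
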